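(* Let $\delta\in(0,1)$, $\eta>0$, $t>0$, let $\mathbf x_\star\in\mathbb C^N$ be a unit vector, and let $\mathbf a=\mathbf g+\imath\mathbf g'$ where $\mathbf g,\mathbf g'$ are independent $\mathrm{Normal}(\mathbf 0,\tfrac12\mathbf I_N)$ random vectors in $\mathbb R^N$. Define $$\mathcal R_\delta=\left\{\mathbf h\in\mathbb C^N:\ \big\|\mathbf h-(\mathbf x_\star^*\mathbf h)\mathbf x_\star\big\|_2\ge\delta\,\big|\mathrm{Im}(\mathbf x_\star^*\mathbf h)\big|\right\},$$ $$\mathcal C'_\delta=\left\{\mathbf z\in\mathbb C^N:\ \delta\langle\mathbf x_\star,\mathbf z\rangle\ge-\sqrt{1-\delta^2}\sqrt{\|\mathbf z\|_2^2-|\mathbf x_\star^*\mathbf z|^2}\right\}.$$ Then for every $\mathbf h\in\mathcal C'_\delta\cap\mathcal R_\delta$ with $\|\mathbf h\|_2>(t\eta)^{-1}$, $$\mathbb P\Big(\langle\mathbf a\mathbf a^*\mathbf x_\star,\mathbf h\rangle>\tfrac12\eta^{-1}\Big)\ge\left(\frac12-\frac{\sqrt{1-\delta^2}}{2}\right)e^{-2\sqrt2\,\delta^{-2}t}.$$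
   Context: $\mathbb C^N$ is regarded as a real inner-product space with inner product $\langle\mathbf x_1,\mathbf x_2\rangle=\mathrm{Re}(\mathbf x_1^*\mathbf x_2)$. $\mathbf x^*$ denotes the conjugate transpose. *)

theory Defs
  imports "HOL-Probability.Probability"
begin

text \<open>C^N is modelled as complex ^ 'n for a finite index type 'n (N = CARD('n)).
  The library norm on complex ^ 'n is the Euclidean 2-norm.\<close>

definition cdot :: "complex ^ 'n \<Rightarrow> complex ^ 'n \<Rightarrow> complex" where
  "cdot x y = (\<Sum>i\<in>UNIV. cnj (x $ i) * y $ i)"

definition rinner :: "complex ^ 'n \<Rightarrow> complex ^ 'n \<Rightarrow> real" where
  "rinner x y = Re (cdot x y)"

definition R_set :: "complex ^ 'n \<Rightarrow> real \<Rightarrow> (complex ^ 'n) set" where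
  "R_set xs \<delta> = {h. norm (h - cdot xs h *s xs) \<ge> \<delta> * \<bar>Im (cdot xs h)\<bar>}"

definition C'_set :: "complex ^ 'n \<Rightarrow> real \<Rightarrow> (complex ^ 'n) set" where
  "C'_set xs \<delta> = {z. \<delta> * rinner xs z \<ge>
      - sqrt (1 - \<delta>^2) * sqrt ((norm z)^2 - (cmod (cdot xs z))^2)}"

text \<open>Law of a random vector in R^N with i.i.d. Normal(0,1/2) coordinates
  (standard deviation sqrt(1/2)).\<close>
definition gauss_half :: "('n::finite \<Rightarrow> real) measure" where
  "gauss_half = PiM UNIV (\<lambda>_. density lborel (normal_density 0 (sqrt (1/2))))"

definition avec :: "('n::finite \<Rightarrow> real) \<Rightarrow> ('n \<Rightarrow> real) \<Rightarrow> complex ^ 'n" where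
  "avec g g' = (\<chi> i. Complex (g i) (g' i))"

end

theory Submission
  imports Defs
begin


typedef ('a::finite) wo = "UNIV :: 'a set" by auto

instance wo :: (finite) finite
proof
  show "finite (UNIV :: 'a wo set)"
    by (metis finite_class.finite_UNIV finite_imageI type_definition.Abs_image type_definition_wo)
qed

instantiation wo :: (finite) linorder
begin
definition less_eq_wo :: "'a wo \<Rightarrow> 'a wo \<Rightarrow> bool" where
  "less_eq_wo x y \<longleftrightarrow> to_nat (Rep_wo x) \<le> to_nat (Rep_wo y)"
definition less_wo :: "'a wo \<Rightarrow> 'a wo \<Rightarrow> bool" where
  "less_wo x y \<longleftrightarrow> to_nat (Rep_wo x) < to_nat (Rep_wo y)"
instance
  by standard (auto simp: less_eq_wo_def less_wo_def Rep_wo_inject)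
end

instance wo :: (finite) wellorder
proof
  fix P :: "'a wo \<Rightarrow> bool" and a
  assume H: "\<And>x. (\<And>y. y < x \<Longrightarrow> P y) \<Longrightarrow> P x"
  show "P a"
  proof (induction "to_nat (Rep_wo a)" arbitrary: a rule: less_induct)
    case less
    then show ?case using H by (auto simp: less_wo_def)
  qed
qed

lemma lborel_orth_invariant:
  fixes T :: "(real, 'm::{finite,wellorder}) vec \<Rightarrow> (real, 'm) vec"
  assumes T: "orthogonal_transformation T"
  shows "distr lborel borel T = lborel"
proof (rule lborel_eqI[symmetric])
  have lin: "linear T" using T orthogonal_transformation_linear by blast
  have Tm[measurable]: "T \<in> borel_measurable borel"
    by (intro borel_measurable_continuous_onI linear_continuous_on linear_conv_bounded_linear[THEN iffD1] lin)
  define T' where "T' = inv T"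
  have T': "orthogonal_transformation T'" unfolding T'_def using orthogonal_transformation_inv[OF T] .
  have bij: "bij T" using T orthogonal_transformation_bij by blast
  fix l u :: "(real,'m) vec"
  assume le: "\<And>b. b \<in> Basis \<Longrightarrow> l \<bullet> b \<le> u \<bullet> b"
  have pre: "T -` box l u = T' ` box l u"
    unfolding T'_def using bij by (simp add: bij_vimage_eq_inv_image)
  have lm: "box l u \<in> lmeasurable" by simp
  have lin': "linear T'" using T' orthogonal_transformation_linear by blast
  have om: "orthogonal_matrix (matrix T')" using T' orthogonal_transformation_matrix by blast
  have det: "\<bar>det (matrix T')\<bar> = 1" using det_orthogonal_matrix[OF om] by auto
  have ml: "measure lebesgue (T' ` box l u) = measure lebesgue (box l u)"
    using measure_linear_image[OF lin' lm] det by simp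
  have bor: "T' ` box l u \<in> sets borel"
    unfolding pre[symmetric] by (rule measurable_sets_borel[OF Tm]) simp
  have ml2: "measure lborel (T' ` box l u) = measure lborel (box l u)"
    using ml bor by simp
  have fin: "emeasure lborel (T' ` box l u) < \<infinity>"
    using bor measurable_linear_image[OF lin' lm] by (simp add: fmeasurable_def)
  have a: "emeasure lborel (T' ` box l u) = ennreal (measure lborel (T' ` box l u))"
    by (rule emeasure_eq_ennreal_measure) (use fin in auto)
  have b: "emeasure lborel (box l u) = ennreal (measure lborel (box l u))"
    by (rule emeasure_eq_ennreal_measure) (use emeasure_lborel_box_finite[of l u] in auto)
  have "emeasure lborel (T' ` box l u) = emeasure lborel (box l u)"
    using a b ml2 by simp
  then show "emeasure (distr lborel borel T) (box l u) = (\<Prod>b\<in>Basis. (u - l) \<bullet> b)"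
    using le Tm by (simp add: emeasure_distr pre[symmetric] emeasure_lborel_box_eq)
qed simp

definition gdens :: "real \<Rightarrow> 'a::euclidean_space \<Rightarrow> real" where
  "gdens \<sigma> x = (\<Prod>b\<in>Basis. normal_density 0 \<sigma> (x \<bullet> b))"

definition gmeas :: "real \<Rightarrow> 'a::euclidean_space measure" where
  "gmeas \<sigma> = density lborel (\<lambda>x. ennreal (gdens \<sigma> x))"

lemma gdens_closed:
  "gdens \<sigma> (x::'a::euclidean_space) = (1 / sqrt (2 * pi * \<sigma>\<^sup>2)) ^ DIM('a) * exp (- (x \<bullet> x) / (2 * \<sigma>\<^sup>2))"
proof -
  have "gdens \<sigma> x = (\<Prod>b\<in>Basis. 1 / sqrt (2 * pi * \<sigma>\<^sup>2) * exp (- (x \<bullet> b)\<^sup>2 / (2 * \<sigma>\<^sup>2)))"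
    unfolding gdens_def normal_density_def by simp
  also have "\<dots> = (1 / sqrt (2 * pi * \<sigma>\<^sup>2)) ^ DIM('a) * (\<Prod>b\<in>Basis. exp (- (x \<bullet> b)\<^sup>2 / (2 * \<sigma>\<^sup>2)))"
    by (simp only: prod.distrib prod_constant)
  also have "(\<Prod>b\<in>Basis. exp (- (x \<bullet> b)\<^sup>2 / (2 * \<sigma>\<^sup>2))) = exp (\<Sum>b\<in>Basis. - (x \<bullet> b)\<^sup>2 / (2 * \<sigma>\<^sup>2))"
    by (simp add: exp_sum)
  also have "(\<Sum>b\<in>Basis. - (x \<bullet> b)\<^sup>2 / (2 * \<sigma>\<^sup>2)) = - (x \<bullet> x) / (2 * \<sigma>\<^sup>2)"
    by (simp add: euclidean_inner[of x x] sum_divide_distrib[symmetric] sum_negf power2_eq_square)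
  finally show ?thesis .
qed

lemma gdens_orth:
  fixes T :: "'a::euclidean_space \<Rightarrow> 'a"
  assumes "orthogonal_transformation T"
  shows "gdens \<sigma> (T x) = gdens \<sigma> x"
  using assms by (simp add: gdens_closed orthogonal_transformation_def)

lemma gdens_nonneg: "\<sigma> > 0 \<Longrightarrow> 0 \<le> gdens \<sigma> x"
  unfolding gdens_def by (simp add: prod_nonneg)

lemma gdens_meas[measurable]: "gdens \<sigma> \<in> borel_measurable borel"
  unfolding gdens_def by measurable

lemma sets_gmeas[simp]: "sets (gmeas \<sigma>) = sets borel"
  by (simp add: gmeas_def)

lemma space_gmeas[simp]: "space (gmeas \<sigma>) = UNIV"
  by (simp add: gmeas_def)

lemma orth_measurable:
  fixes T :: "'a::euclidean_space \<Rightarrow> 'a"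
  assumes "orthogonal_transformation T"
  shows "T \<in> borel_measurable borel"
  using assms orthogonal_transformation_linear
  by (intro borel_measurable_continuous_onI linear_continuous_on linear_conv_bounded_linear[THEN iffD1]) blast

lemma gmeas_orth_invariant:
  fixes T :: "(real, 'm::{finite,wellorder}) vec \<Rightarrow> (real, 'm) vec"
  assumes T: "orthogonal_transformation T"
  shows "distr (gmeas \<sigma>) borel T = gmeas \<sigma>"
proof -
  have Tm: "T \<in> measurable lborel borel" using orth_measurable[OF T] by simp
  have "density (distr lborel borel T) (\<lambda>x. ennreal (gdens \<sigma> x)) =
        distr (density lborel (\<lambda>x. ennreal (gdens \<sigma> (T x)))) borel T"
    by (rule density_distr[OF _ Tm]) simp
  then show ?thesis
    unfolding gmeas_def lborel_orth_invariant[OF T] gdens_orth[OF T] by (rule sym)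
qed

definition nmeas :: "real \<Rightarrow> real measure" where
  "nmeas \<sigma> = density lborel (\<lambda>x. ennreal (normal_density 0 \<sigma> x))"

lemma sets_nmeas[simp]: "sets (nmeas \<sigma>) = sets borel"
  by (simp add: nmeas_def)
lemma space_nmeas[simp]: "space (nmeas \<sigma>) = UNIV"
  by (simp add: nmeas_def)
lemma prob_space_nmeas: "\<sigma> > 0 \<Longrightarrow> prob_space (nmeas \<sigma>)"
  unfolding nmeas_def by (rule prob_space_normal_density)

lemma prod_indicator_all:
  assumes "finite J"
  shows "(\<Prod>j\<in>J. indicator (A j) (g y j) :: ennreal) = indicator {x. \<forall>j\<in>J. g x j \<in> A j} y"
  using assms by (induction J rule: finite_induct) (auto simp: indicator_def)

lemma gmeas_box:
  fixes b :: "'j \<Rightarrow> 'a::euclidean_space"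
  assumes \<sigma>: "\<sigma> > 0" and J: "finite J" and inj: "inj_on b J" and bB: "b ` J \<subseteq> Basis"
    and A: "\<And>j. j \<in> J \<Longrightarrow> A j \<in> sets borel"
  shows "emeasure (gmeas \<sigma>) {x. \<forall>j\<in>J. x \<bullet> b j \<in> A j} = (\<Prod>j\<in>J. emeasure (nmeas \<sigma>) (A j))"
proof -
  define f where "f c t = ennreal (normal_density 0 \<sigma> t) * (if c \<in> b ` J then indicator (A (the_inv_into J b c)) t else 1)" for c t
  have Am: "{x::'a. \<forall>j\<in>J. x \<bullet> b j \<in> A j} \<in> sets borel"
    using A J by measurable
  have fm: "f c \<in> borel_measurable borel" if "c \<in> Basis" for c
  proof (cases "c \<in> b ` J")
    case True
    then have "the_inv_into J b c \<in> J" using inj by (simp add: the_inv_into_into)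
    then show ?thesis using True A unfolding f_def by measurable
  next
    case False
    then have "f c = (\<lambda>t. ennreal (normal_density 0 \<sigma> t))" by (simp add: f_def fun_eq_iff)
    then show ?thesis by simp
  qed
  have "emeasure (gmeas \<sigma>) {x. \<forall>j\<in>J. x \<bullet> b j \<in> A j} =
      (\<integral>\<^sup>+x. ennreal (gdens \<sigma> x) * indicator {x. \<forall>j\<in>J. x \<bullet> b j \<in> A j} x \<partial>lborel)"
    unfolding gmeas_def using Am by (simp add: emeasure_density)
  also have "\<dots> = (\<integral>\<^sup>+x. (\<Prod>c\<in>Basis. f c (x \<bullet> c)) \<partial>lborel)"
  proof (rule nn_integral_cong)
    fix x :: 'a
    have "(\<Prod>c\<in>Basis. f c (x \<bullet> c)) = (\<Prod>c\<in>Basis. ennreal (normal_density 0 \<sigma> (x \<bullet> c))) *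
        (\<Prod>c\<in>Basis. (if c \<in> b ` J then indicator (A (the_inv_into J b c)) (x \<bullet> c) else 1))"
      unfolding f_def by (simp add: prod.distrib)
    also have "(\<Prod>c\<in>Basis. (if c \<in> b ` J then indicator (A (the_inv_into J b c)) (x \<bullet> c) else 1) :: ennreal)
        = (\<Prod>c\<in>b ` J. indicator (A (the_inv_into J b c)) (x \<bullet> c))"
      using bB by (simp add: prod.If_cases Int_absorb1)
    also have "\<dots> = (\<Prod>j\<in>J. indicator (A j) (x \<bullet> b j))"
      using inj by (simp add: prod.reindex the_inv_into_f_f)
    also have "\<dots> = indicator {x. \<forall>j\<in>J. x \<bullet> b j \<in> A j} x"
      using prod_indicator_all[OF J, where g="\<lambda>x j. x \<bullet> b j"] by simp
    finally show "ennreal (gdens \<sigma> x) * indicator {x. \<forall>j\<in>J. x \<bullet> b j \<in> A j} x = (\<Prod>c\<in>Basis. f c (x \<bullet> c))"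
      unfolding gdens_def using \<sigma> by (simp add: prod_ennreal)
  qed
  also have "\<dots> = (\<Prod>c\<in>Basis. (\<integral>\<^sup>+t. f c t \<partial>lborel))"
    by (rule nn_integral_lborel_prod) (use fm in auto)
  also have "\<dots> = (\<Prod>c\<in>b ` J. (\<integral>\<^sup>+t. f c t \<partial>lborel)) * (\<Prod>c\<in>Basis - b ` J. (\<integral>\<^sup>+t. f c t \<partial>lborel))"
    using bB by (metis (no_types, lifting) Diff_partition finite_Basis prod.union_disjoint Diff_disjoint finite_Diff finite_subset)
  also have "(\<Prod>c\<in>Basis - b ` J. (\<integral>\<^sup>+t. f c t \<partial>lborel)) = 1"
  proof (rule prod.neutral, safe)
    fix c assume "c \<in> Basis" "c \<notin> b ` J"
    then have "(\<integral>\<^sup>+t. f c t \<partial>lborel) = emeasure (nmeas \<sigma>) UNIV"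
      unfolding f_def nmeas_def by (simp add: emeasure_density)
    also have "\<dots> = 1" using prob_space.emeasure_space_1[OF prob_space_nmeas[OF \<sigma>]] by (simp add: nmeas_def)
    finally show "(\<integral>\<^sup>+t. f c t \<partial>lborel) = 1" .
  qed
  also have "(\<Prod>c\<in>b ` J. (\<integral>\<^sup>+t. f c t \<partial>lborel)) = (\<Prod>j\<in>J. (\<integral>\<^sup>+t. f (b j) t \<partial>lborel))"
    using prod.reindex[OF inj, of "\<lambda>c. (\<integral>\<^sup>+t. f c t \<partial>lborel)"] by (simp add: comp_def)
  also have "\<dots> = (\<Prod>j\<in>J. emeasure (nmeas \<sigma>) (A j))"
  proof (rule prod.cong[OF refl])
    fix j assume j: "j \<in> J"
    then have "f (b j) = (\<lambda>t. ennreal (normal_density 0 \<sigma> t) * indicator (A j) t)"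
      using inj by (simp add: f_def fun_eq_iff the_inv_into_f_f)
    then show "(\<integral>\<^sup>+t. f (b j) t \<partial>lborel) = emeasure (nmeas \<sigma>) (A j)"
      unfolding nmeas_def using A[OF j] by (simp add: emeasure_density)
  qed
  finally show ?thesis by simp
qed

lemma orth_ext:
  fixes v :: "'j \<Rightarrow> 'a::euclidean_space"
  assumes J: "finite J" and inj: "inj_on v J"
    and orth: "\<And>i j. i \<in> J \<Longrightarrow> j \<in> J \<Longrightarrow> i \<noteq> j \<Longrightarrow> v i \<bullet> v j = 0"
    and unit: "\<And>j. j \<in> J \<Longrightarrow> norm (v j) = 1"
  obtains T :: "'a \<Rightarrow> 'a" and b where "orthogonal_transformation T" "inj_on b J" "b ` J \<subseteq> Basis"
    "\<And>j. j \<in> J \<Longrightarrow> T (v j) = b j"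
proof -
  define S where "S = v ` J"
  have finS: "finite S" using J S_def by simp
  have Sorth: "\<And>s s'. s \<in> S \<Longrightarrow> s' \<in> S \<Longrightarrow> s \<noteq> s' \<Longrightarrow> s \<bullet> s' = 0"
    using orth unfolding S_def by blast
  have Sunit: "\<And>s. s \<in> S \<Longrightarrow> s \<bullet> s = 1"
    using unit unfolding S_def by (auto simp: norm_eq_1)
  define W where "W = {y. \<forall>x \<in> S. orthogonal x y}"
  have "subspace W" unfolding W_def by (rule subspace_orthogonal_to_vectors)
  then obtain C where C: "C \<subseteq> W" "pairwise orthogonal C" "\<And>x. x \<in> C \<Longrightarrow> norm x = 1"
      "independent C" "card C = dim W" "span C = W"
    using orthonormal_basis_subspace by blast
  have finC: "finite C" using C(4) independent_imp_finite by blast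
  define B where "B = S \<union> C"
  have finB: "finite B" using finS finC B_def by simp
  have Cunit: "\<And>c. c \<in> C \<Longrightarrow> c \<bullet> c = 1" using C(3) by (simp add: norm_eq_1)
  have SC: "\<And>s c. s \<in> S \<Longrightarrow> c \<in> C \<Longrightarrow> s \<bullet> c = 0"
    using C(1) unfolding W_def orthogonal_def by blast
  have Borth: "pairwise orthogonal B"
    unfolding B_def pairwise_def orthogonal_def
    using Sorth SC C(2) by (auto simp: pairwise_def orthogonal_def) (metis inner_commute)+
  have Bunit: "\<And>x. x \<in> B \<Longrightarrow> norm x = 1"
    unfolding B_def using Sunit C(3) by (auto simp: norm_eq_1)
  have spanB: "x \<in> span B" for x
  proof -
    define r where "r = x - (\<Sum>s\<in>S. (x \<bullet> s) *\<^sub>R s)"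
    have "r \<in> W"
    proof -
      have "s' \<bullet> r = 0" if "s' \<in> S" for s'
      proof -
        have "s' \<bullet> (\<Sum>s\<in>S. (x \<bullet> s) *\<^sub>R s) = (\<Sum>s\<in>S. (x \<bullet> s) * (s' \<bullet> s))"
          by (simp add: inner_sum_right)
        also have "\<dots> = (\<Sum>s\<in>S. if s = s' then x \<bullet> s' else 0)"
          by (rule sum.cong) (use that Sorth Sunit in \<open>auto simp: inner_commute\<close>)
        also have "\<dots> = x \<bullet> s'" using finS that by simp
        finally show ?thesis unfolding r_def by (simp add: inner_diff_right inner_commute)
      qed
      then show ?thesis unfolding W_def orthogonal_def by blast
    qed
    then have "r \<in> span B" using C(6) span_mono[of C B] B_def by blast
    moreover have "(\<Sum>s\<in>S. (x \<bullet> s) *\<^sub>R s) \<in> span B"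
      by (intro span_sum span_mul span_base) (auto simp: B_def)
    ultimately have "r + (\<Sum>s\<in>S. (x \<bullet> s) *\<^sub>R s) \<in> span B" by (rule span_add)
    then show ?thesis unfolding r_def by simp
  qed
  have indB: "independent B"
    using Borth Bunit by (metis norm_zero pairwise_orthogonal_independent zero_neq_one)
  have cardB: "card B = card (Basis :: 'a set)"
  proof -
    have "dim B = card B" using indB by (rule dim_eq_card_independent)
    moreover have "dim B = dim (UNIV :: 'a set)"
      using spanB by (metis dim_span subsetI subset_antisym UNIV_I span_UNIV)
    ultimately show ?thesis by (simp add: dim_UNIV)
  qed
  obtain \<phi> :: "'a \<Rightarrow> 'a" where \<phi>: "bij_betw \<phi> B Basis"
    using finite_same_card_bij[OF finB finite_Basis cardB] by blast
  define T where "T x = (\<Sum>\<beta>\<in>B. (x \<bullet> \<beta>) *\<^sub>R \<phi> \<beta>)" for x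
  have expand: "(\<Sum>\<beta>\<in>B. (x \<bullet> \<beta>) *\<^sub>R \<beta>) = x" for x
    by (rule orthonormal_basis_expand[OF Borth Bunit spanB finB])
  have Binner: "\<beta> \<in> B \<Longrightarrow> \<beta>' \<in> B \<Longrightarrow> \<beta> \<bullet> \<beta>' = (if \<beta> = \<beta>' then 1 else 0)" for \<beta> \<beta>'
    using Borth Bunit by (auto simp: pairwise_def orthogonal_def norm_eq_1)
  have phiinner: "\<beta> \<in> B \<Longrightarrow> \<beta>' \<in> B \<Longrightarrow> \<phi> \<beta> \<bullet> \<phi> \<beta>' = (if \<beta> = \<beta>' then 1 else 0)" for \<beta> \<beta>'
  proof -
    assume a: "\<beta> \<in> B" "\<beta>' \<in> B"
    then have "\<phi> \<beta> \<in> Basis" "\<phi> \<beta>' \<in> Basis" using \<phi> bij_betwE by blast+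
    moreover have "\<phi> \<beta> = \<phi> \<beta>' \<longleftrightarrow> \<beta> = \<beta>'" using a \<phi> by (auto simp: bij_betw_def inj_on_def)
    ultimately show ?thesis by (simp add: inner_Basis)
  qed
  have parseval: "x \<bullet> y = (\<Sum>\<beta>\<in>B. (x \<bullet> \<beta>) * (y \<bullet> \<beta>))" for x y
  proof -
    have "x \<bullet> y = x \<bullet> (\<Sum>\<beta>\<in>B. (y \<bullet> \<beta>) *\<^sub>R \<beta>)" by (simp add: expand)
    also have "\<dots> = (\<Sum>\<beta>\<in>B. (x \<bullet> \<beta>) * (y \<bullet> \<beta>))" by (simp add: inner_sum_right mult.commute)
    finally show ?thesis .
  qed
  have Tinner: "T x \<bullet> T y = x \<bullet> y" for x y
  proof -
    have "T x \<bullet> T y = (\<Sum>\<beta>\<in>B. \<Sum>\<beta>'\<in>B. y \<bullet> \<beta> * (x \<bullet> \<beta>' * (\<phi> \<beta>' \<bullet> \<phi> \<beta>)))"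
      unfolding T_def by (simp add: inner_sum_left inner_sum_right sum_distrib_left mult.assoc)
    also have "\<dots> = (\<Sum>\<beta>\<in>B. (x \<bullet> \<beta>) * (y \<bullet> \<beta>))"
    proof (rule sum.cong[OF refl])
      fix \<beta> assume "\<beta> \<in> B"
      then show "(\<Sum>\<beta>'\<in>B. y \<bullet> \<beta> * (x \<bullet> \<beta>' * (\<phi> \<beta>' \<bullet> \<phi> \<beta>))) = (x \<bullet> \<beta>) * (y \<bullet> \<beta>)"
        using finB by (simp add: phiinner if_distrib cong: if_cong)
    qed
    finally show ?thesis using parseval[of x y] by simp
  qed
  have linT: "linear T"
    unfolding T_def[abs_def] by (rule linearI) (simp_all add: inner_add_left scaleR_add_left sum.distrib scaleR_sum_right)
  have orthT: "orthogonal_transformation T"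
    unfolding orthogonal_transformation_def using linT Tinner by blast
  have Tv: "T s = \<phi> s" if "s \<in> B" for s
  proof -
    have "T s = (\<Sum>\<beta>\<in>B. (if \<beta> = s then \<phi> \<beta> else 0))"
      unfolding T_def by (rule sum.cong) (use that Binner inner_commute in auto)
    also have "\<dots> = \<phi> s" using finB that by simp
    finally show ?thesis .
  qed
  have i1: "inj_on (\<lambda>j. \<phi> (v j)) J"
    using inj \<phi> unfolding bij_betw_def inj_on_def B_def S_def by blast
  have i2: "(\<lambda>j. \<phi> (v j)) ` J \<subseteq> Basis"
    using \<phi> unfolding bij_betw_def B_def S_def by blast
  have i3: "T (v j) = \<phi> (v j)" if "j \<in> J" for j
    using Tv that unfolding B_def S_def by blast
  show ?thesis by (rule that[of T "\<lambda>j. \<phi> (v j)"]) (use orthT i1 i2 i3 in auto)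
qed

lemma gmeas_PiM_basis:
  fixes b :: "'j \<Rightarrow> 'a::euclidean_space"
  assumes \<sigma>: "\<sigma> > 0" and J: "finite J" and inj: "inj_on b J" and bB: "b ` J \<subseteq> Basis"
  shows "distr (gmeas \<sigma>) (PiM J (\<lambda>_. borel)) (\<lambda>x. \<lambda>j\<in>J. x \<bullet> b j) = PiM J (\<lambda>_. nmeas \<sigma>)"
proof -
  interpret prob_space "nmeas \<sigma>" using prob_space_nmeas[OF \<sigma>] .
  interpret P: product_sigma_finite "\<lambda>_. nmeas \<sigma>"
    unfolding product_sigma_finite_def by (simp add: sigma_finite_measure_axioms)
  have Fm: "(\<lambda>x. \<lambda>j\<in>J. x \<bullet> b j) \<in> measurable (gmeas \<sigma>) (PiM J (\<lambda>_. borel))"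
    by (auto intro!: measurable_restrict simp: measurable_cong_sets[OF sets_gmeas refl])
  have setsN: "sets (PiM J (\<lambda>_. nmeas \<sigma>)) = sets (PiM J (\<lambda>_. (borel :: real measure)))"
    by (rule sets_PiM_cong) (auto simp: nmeas_def)
  show ?thesis
  proof (rule P.PiM_eqI[OF J])
    show "sets (distr (gmeas \<sigma>) (PiM J (\<lambda>_. borel)) (\<lambda>x. \<lambda>j\<in>J. x \<bullet> b j)) = sets (PiM J (\<lambda>_. nmeas \<sigma>))"
      using setsN by simp
    fix A assume A: "\<And>i. i \<in> J \<Longrightarrow> A i \<in> sets (nmeas \<sigma>)"
    then have Ab: "\<And>i. i \<in> J \<Longrightarrow> A i \<in> sets borel" by (simp add: nmeas_def)
    have "Pi\<^sub>E J A \<in> sets (PiM J (\<lambda>_. (borel :: real measure)))"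
      using Ab by (intro sets_PiM_I_finite J) auto
    then have "emeasure (distr (gmeas \<sigma>) (PiM J (\<lambda>_. borel)) (\<lambda>x. \<lambda>j\<in>J. x \<bullet> b j)) (Pi\<^sub>E J A)
        = emeasure (gmeas \<sigma>) ((\<lambda>x. \<lambda>j\<in>J. x \<bullet> b j) -` Pi\<^sub>E J A \<inter> space (gmeas \<sigma>))"
      by (rule emeasure_distr[OF Fm])
    also have "(\<lambda>x. \<lambda>j\<in>J. x \<bullet> b j) -` Pi\<^sub>E J A \<inter> space (gmeas \<sigma>) = {x. \<forall>j\<in>J. x \<bullet> b j \<in> A j}"
      by (auto simp: PiE_iff)
    also have "emeasure (gmeas \<sigma>) {x. \<forall>j\<in>J. x \<bullet> b j \<in> A j} = (\<Prod>j\<in>J. emeasure (nmeas \<sigma>) (A j))"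
      by (rule gmeas_box[OF \<sigma> J inj bB Ab])
    finally show "emeasure (distr (gmeas \<sigma>) (PiM J (\<lambda>_. borel)) (\<lambda>x. \<lambda>j\<in>J. x \<bullet> b j)) (Pi\<^sub>E J A)
        = (\<Prod>j\<in>J. emeasure (nmeas \<sigma>) (A j))" .
  qed
qed

lemma gmeas_PiM_orth:
  fixes v :: "'j \<Rightarrow> (real, 'm::{finite,wellorder}) vec"
  assumes \<sigma>: "\<sigma> > 0" and J: "finite J" and inj: "inj_on v J"
    and orth: "\<And>i j. i \<in> J \<Longrightarrow> j \<in> J \<Longrightarrow> i \<noteq> j \<Longrightarrow> v i \<bullet> v j = 0"
    and unit: "\<And>j. j \<in> J \<Longrightarrow> norm (v j) = 1"
  shows "distr (gmeas \<sigma>) (PiM J (\<lambda>_. borel)) (\<lambda>x. \<lambda>j\<in>J. x \<bullet> v j) = PiM J (\<lambda>_. nmeas \<sigma>)"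
proof -
  obtain T :: "(real, 'm) vec \<Rightarrow> (real, 'm) vec" and b where T: "orthogonal_transformation T"
    and b: "inj_on b J" "b ` J \<subseteq> Basis" and Tv: "\<And>j. j \<in> J \<Longrightarrow> T (v j) = b j"
    using orth_ext[OF J inj orth unit] by blast
  have eq: "(\<lambda>x. \<lambda>j\<in>J. x \<bullet> v j) = (\<lambda>x. \<lambda>j\<in>J. x \<bullet> b j) \<circ> T"
  proof
    fix x
    have "T x \<bullet> b j = x \<bullet> v j" if "j \<in> J" for j
      using Tv[OF that] T unfolding orthogonal_transformation_def by metis
    then show "(\<lambda>j\<in>J. x \<bullet> v j) = ((\<lambda>x. \<lambda>j\<in>J. x \<bullet> b j) \<circ> T) x"
      by (auto simp: restrict_def fun_eq_iff)
  qed
  have Tm: "T \<in> measurable (gmeas \<sigma>) borel"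
    using orth_measurable[OF T] by (simp add: measurable_cong_sets[OF sets_gmeas refl])
  have Gm: "(\<lambda>x. \<lambda>j\<in>J. x \<bullet> b j) \<in> measurable borel (PiM J (\<lambda>_. borel))"
    by (auto intro!: measurable_restrict)
  have "distr (gmeas \<sigma>) (PiM J (\<lambda>_. borel)) (\<lambda>x. \<lambda>j\<in>J. x \<bullet> v j)
      = distr (distr (gmeas \<sigma>) borel T) (PiM J (\<lambda>_. borel)) (\<lambda>x. \<lambda>j\<in>J. x \<bullet> b j)"
    unfolding eq by (rule distr_distr[OF Gm Tm, symmetric])
  also have "\<dots> = PiM J (\<lambda>_. nmeas \<sigma>)"
    unfolding gmeas_orth_invariant[OF T] by (rule gmeas_PiM_basis[OF \<sigma> J b])
  finally show ?thesis .
qed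

definition emb :: "('n::finite \<Rightarrow> real) \<times> ('n \<Rightarrow> real) \<Rightarrow> (real, ('n \<times> bool) wo) vec" where
  "emb p = (\<chi> k. (case Rep_wo k of (i, c) \<Rightarrow> if c then fst p i else snd p i))"

lemma emb_nth: "emb p $ Abs_wo (i, c) = (if c then fst p i else snd p i)"
  by (simp add: emb_def Abs_wo_inverse)

lemma prod_UNIV_pair_bool:
  fixes f :: "'n::finite \<times> bool \<Rightarrow> 'b::comm_monoid_mult"
  shows "(\<Prod>j\<in>UNIV. f j) = (\<Prod>i\<in>UNIV. f (i, True)) * (\<Prod>i\<in>UNIV. f (i, False))"
proof -
  have "(\<Prod>j\<in>UNIV. f j) = (\<Prod>j\<in>UNIV \<times> UNIV. f j)" by simp
  also have "\<dots> = (\<Prod>i\<in>UNIV. \<Prod>c\<in>UNIV. f (i, c))"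
    using prod.cartesian_product[of "\<lambda>i c. f (i, c)" UNIV UNIV] by simp
  also have "\<dots> = (\<Prod>i\<in>UNIV. f (i, True) * f (i, False))" by (simp add: UNIV_bool mult.commute)
  finally show ?thesis by (simp add: prod.distrib)
qed

lemma emb_measurable:
  "emb \<in> measurable (PiM UNIV (\<lambda>_::'n::finite. M) \<Otimes>\<^sub>M PiM UNIV (\<lambda>_. M)) borel"
  if sM: "sets M = sets (borel :: real measure)"
proof -
  have "(\<lambda>p. emb p \<bullet> i) \<in> borel_measurable (PiM UNIV (\<lambda>_::'n::finite. M) \<Otimes>\<^sub>M PiM UNIV (\<lambda>_. M))"
    if i: "i \<in> Basis" for i :: "(real, ('n \<times> bool) wo) vec"
  proof -
    obtain k where k: "i = axis k 1" using i by (auto simp: Basis_vec_def)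
    obtain j c where jc: "k = Abs_wo (j, c)" by (metis Rep_wo_inverse surj_pair)
    have "(\<lambda>p. emb p \<bullet> i) = (\<lambda>p. if c then fst p j else snd p j)"
      by (simp add: k jc cart_eq_inner_axis[symmetric] emb_nth)
    moreover have "(\<lambda>p. if c then fst p j else snd p j) \<in> borel_measurable (PiM UNIV (\<lambda>_::'n::finite. M) \<Otimes>\<^sub>M PiM UNIV (\<lambda>_. M))"
    proof -
      have m1: "(\<lambda>p. fst p j) \<in> measurable (PiM UNIV (\<lambda>_::'n::finite. M) \<Otimes>\<^sub>M PiM UNIV (\<lambda>_. M)) M"
        by measurable
      have m2: "(\<lambda>p. snd p j) \<in> measurable (PiM UNIV (\<lambda>_::'n::finite. M) \<Otimes>\<^sub>M PiM UNIV (\<lambda>_. M)) M"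
        by measurable
      have eqm: "measurable (PiM UNIV (\<lambda>_::'n::finite. M) \<Otimes>\<^sub>M PiM UNIV (\<lambda>_. M)) M = borel_measurable (PiM UNIV (\<lambda>_::'n::finite. M) \<Otimes>\<^sub>M PiM UNIV (\<lambda>_. M))"
        by (rule measurable_cong_sets[OF refl sM])
      show ?thesis using m1 m2 unfolding eqm by (cases c) simp_all
    qed
    ultimately show ?thesis by simp
  qed
  then show ?thesis by (simp add: borel_measurable_euclidean_space[of emb])
qed

lemma emb_distr:
  assumes \<sigma>: "\<sigma> > 0"
  shows "distr (PiM UNIV (\<lambda>_::'n::finite. nmeas \<sigma>) \<Otimes>\<^sub>M PiM UNIV (\<lambda>_. nmeas \<sigma>)) borel emb = gmeas \<sigma>"
proof -
  interpret N: prob_space "nmeas \<sigma>" using prob_space_nmeas[OF \<sigma>] .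
  interpret P: product_prob_space "\<lambda>_::'n. nmeas \<sigma>" ..
  interpret G: prob_space "PiM UNIV (\<lambda>_::'n. nmeas \<sigma>)" by (rule prob_space_PiM) (rule N.prob_space_axioms)
  interpret GG: pair_prob_space "PiM UNIV (\<lambda>_::'n. nmeas \<sigma>)" "PiM UNIV (\<lambda>_::'n. nmeas \<sigma>)" ..
  let ?G = "PiM UNIV (\<lambda>_::'n. nmeas \<sigma>)"
  let ?M = "distr (?G \<Otimes>\<^sub>M ?G) borel emb"
  have em: "emb \<in> measurable (?G \<Otimes>\<^sub>M ?G) borel"
    by (rule emb_measurable) simp
  interpret DM: prob_space ?M by (rule GG.prob_space_distr[OF em])
  let ?E = "range (\<lambda>(a, b). box a b :: (real, ('n \<times> bool) wo) vec set)"
  show ?thesis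
  proof (rule measure_eqI_generator_eq[where \<Omega>=UNIV and E="?E" and A="\<lambda>n. box (- (real n *\<^sub>R One)) (real n *\<^sub>R One)"])
    show "Int_stable ?E" by (auto simp: Int_stable_def box_Int_box)
    show "?E \<subseteq> Pow UNIV" by simp
    show "sets ?M = sigma_sets UNIV ?E" "sets (gmeas \<sigma>) = sigma_sets UNIV ?E"
      by (simp_all add: borel_eq_box)
    show "range (\<lambda>n. box (- (real n *\<^sub>R One)) (real n *\<^sub>R One)) \<subseteq> ?E" by auto
    show "(\<Union>n. box (- (real n *\<^sub>R One)) (real n *\<^sub>R One)) = (UNIV :: (real, ('n \<times> bool) wo) vec set)"
      by (rule UN_box_eq_UNIV)
    show "emeasure ?M (box (- (real n *\<^sub>R One)) (real n *\<^sub>R One)) \<noteq> \<infinity>" for n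
      by simp
    fix X assume "X \<in> ?E"
    then obtain a b where X: "X = box a b" by auto
    define I where "I j = {a $ Abs_wo j <..< b $ Abs_wo j}" for j
    have Ib: "I j \<in> sets borel" for j unfolding I_def by simp
    define bb where "bb j = (axis (Abs_wo j) 1 :: (real, ('n \<times> bool) wo) vec)" for j
    have bbinj: "inj_on bb UNIV"
      by (auto simp: inj_on_def axis_eq_axis Abs_wo_inject bb_def)
    have bbB: "bb ` UNIV \<subseteq> Basis"
      by (auto simp: Basis_vec_def bb_def)
    have boxeq: "x \<in> box a b \<longleftrightarrow> (\<forall>j. x $ Abs_wo j \<in> I j)" for x
      unfolding mem_box_cart I_def by (metis Rep_wo_inverse greaterThanLessThan_iff)
    have pre: "emb -` box a b \<inter> space (?G \<Otimes>\<^sub>M ?G) = (Pi\<^sub>E UNIV (\<lambda>i. I (i, True))) \<times> (Pi\<^sub>E UNIV (\<lambda>i. I (i, False)))"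
      by (auto simp: boxeq emb_nth space_pair_measure space_PiM PiE_iff) (metis fst_conv snd_conv)+
    have "emeasure ?M X = emeasure (?G \<Otimes>\<^sub>M ?G) ((Pi\<^sub>E UNIV (\<lambda>i. I (i, True))) \<times> (Pi\<^sub>E UNIV (\<lambda>i. I (i, False))))"
      unfolding X by (simp add: emeasure_distr[OF em] pre[symmetric])
    also have "\<dots> = emeasure ?G (Pi\<^sub>E UNIV (\<lambda>i. I (i, True))) * emeasure ?G (Pi\<^sub>E UNIV (\<lambda>i. I (i, False)))"
      by (rule G.emeasure_pair_measure_Times) (auto intro!: sets_PiM_I_finite simp: Ib)
    also have "\<dots> = (\<Prod>i\<in>UNIV. emeasure (nmeas \<sigma>) (I (i, True))) * (\<Prod>i\<in>UNIV. emeasure (nmeas \<sigma>) (I (i, False)))"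
      by (simp add: P.emeasure_PiM Ib)
    also have "\<dots> = (\<Prod>j\<in>UNIV. emeasure (nmeas \<sigma>) (I j))"
      by (rule prod_UNIV_pair_bool[symmetric])
    also have "\<dots> = emeasure (gmeas \<sigma>) {x. \<forall>j\<in>UNIV. x \<bullet> bb j \<in> I j}"
      by (rule gmeas_box[OF \<sigma> _ bbinj bbB Ib, symmetric]) simp
    also have "{x. \<forall>j\<in>UNIV. x \<bullet> bb j \<in> I j} = X"
      unfolding X by (auto simp: boxeq cart_eq_inner_axis[symmetric] bb_def)
    finally show "emeasure ?M X = emeasure (gmeas \<sigma>) X" .
  qed
qed

lemma nn_integral_reflect:
  fixes g :: "real \<Rightarrow> ennreal"
  assumes [measurable]: "g \<in> borel_measurable borel"
  shows "(\<integral>\<^sup>+x. g x \<partial>lborel) = (\<integral>\<^sup>+x. g (- x) \<partial>lborel)"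
  using nn_integral_real_affine[of g "-1" 0] by simp

lemma nn_integral_even:
  fixes g :: "real \<Rightarrow> ennreal"
  assumes [measurable]: "g \<in> borel_measurable borel" and ev: "\<And>x. g (- x) = g x"
  shows "(\<integral>\<^sup>+x. g x \<partial>lborel) = 2 * (\<integral>\<^sup>+x. g x * indicator {0..} x \<partial>lborel)"
proof -
  have "(\<integral>\<^sup>+x. g x \<partial>lborel) = (\<integral>\<^sup>+x. g x * indicator {0..} x + g x * indicator {..<0} x \<partial>lborel)"
    by (rule nn_integral_cong) (auto split: split_indicator)
  also have "\<dots> = (\<integral>\<^sup>+x. g x * indicator {0..} x \<partial>lborel) + (\<integral>\<^sup>+x. g x * indicator {..<0} x \<partial>lborel)"
    by (rule nn_integral_add) auto
  also have "(\<integral>\<^sup>+x. g x * indicator {..<0} x \<partial>lborel) = (\<integral>\<^sup>+x. g (-x) * indicator {..<0} (-x) \<partial>lborel)"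
    by (rule nn_integral_reflect) auto
  also have "\<dots> = (\<integral>\<^sup>+x. g x * indicator {0..} x \<partial>lborel)"
  proof (rule nn_integral_cong_AE)
    show "AE x in lborel. g (- x) * indicator {..<0} (- x) = g x * indicator {0..} x"
      using AE_lborel_singleton[of 0] by eventually_elim (auto simp: ev split: split_indicator)
  qed
  finally show ?thesis by (simp add: mult_2)
qed

lemma two_ennreal: "0 \<le> x \<Longrightarrow> 2 * ennreal x = ennreal (2 * x)"
  by (simp add: ennreal_mult)

lemma integral_arctan: "(\<integral>\<^sup>+s. ennreal (1 / (1 + s\<^sup>2)) \<partial>lborel) = ennreal pi"
proof -
  have "(\<integral>\<^sup>+s. ennreal (1 / (1 + s\<^sup>2)) \<partial>lborel) = 2 * (\<integral>\<^sup>+s. ennreal (1 / (1 + s\<^sup>2)) * indicator {0..} s \<partial>lborel)"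
    by (rule nn_integral_even) auto
  also have "(\<integral>\<^sup>+s. ennreal (1 / (1 + s\<^sup>2)) * indicator {0..} s \<partial>lborel) = ennreal (pi / 2 - arctan 0)"
  proof (rule nn_integral_FTC_atLeast)
    show "((\<lambda>a. arctan a) \<longlongrightarrow> pi / 2) at_top" by (rule tendsto_arctan_at_top)
  qed (auto intro!: derivative_eq_intros simp: add_nonneg_eq_0_iff field_simps power2_eq_square)
  finally show ?thesis by (simp add: two_ennreal)
qed

lemma integral_abs_gauss_tail:
  fixes a r :: real
  assumes a: "a > 0" and r: "r \<ge> 0"
  shows "(\<integral>\<^sup>+x. ennreal (\<bar>x\<bar> * exp (- a * x\<^sup>2)) * indicator {x. r < a * x\<^sup>2} x \<partial>lborel) = ennreal (exp (- r) / a)"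
proof -
  define c where "c = sqrt (r / a)"
  have c: "c \<ge> 0" "a * c\<^sup>2 = r" using a r by (auto simp: c_def)
  have "(\<integral>\<^sup>+x. ennreal (\<bar>x\<bar> * exp (- a * x\<^sup>2)) * indicator {x. r < a * x\<^sup>2} x \<partial>lborel) =
      2 * (\<integral>\<^sup>+x. ennreal (\<bar>x\<bar> * exp (- a * x\<^sup>2)) * indicator {x. r < a * x\<^sup>2} x * indicator {0..} x \<partial>lborel)"
    by (rule nn_integral_even) (auto split: split_indicator)
  also have "(\<integral>\<^sup>+x. ennreal (\<bar>x\<bar> * exp (- a * x\<^sup>2)) * indicator {x. r < a * x\<^sup>2} x * indicator {0..} x \<partial>lborel)
      = (\<integral>\<^sup>+x. ennreal (x * exp (- a * x\<^sup>2)) * indicator {c..} x \<partial>lborel)"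
  proof (rule nn_integral_cong_AE)
    show "AE x in lborel. ennreal (\<bar>x\<bar> * exp (- a * x\<^sup>2)) * indicator {x. r < a * x\<^sup>2} x * indicator {0..} x =
        ennreal (x * exp (- a * x\<^sup>2)) * indicator {c..} x"
      using AE_lborel_singleton[of c]
    proof eventually_elim
      fix x assume xc: "x \<noteq> c"
      have "(r < a * x\<^sup>2 \<and> 0 \<le> x) \<longleftrightarrow> c \<le> x"
      proof
        assume h: "r < a * x\<^sup>2 \<and> 0 \<le> x"
        then have "c\<^sup>2 < x\<^sup>2" using c a by (metis mult_less_cancel_left_pos)
        then show "c \<le> x" using h c by (meson abs_le_square_iff abs_of_nonneg less_imp_le not_le power_mono)
      next
        assume h: "c \<le> x"
        then have "c < x" using xc by simp
        then have "c\<^sup>2 < x\<^sup>2" using c by (simp add: power_strict_mono)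
        then show "r < a * x\<^sup>2 \<and> 0 \<le> x" using c a h by auto
      qed
      then show "ennreal (\<bar>x\<bar> * exp (- a * x\<^sup>2)) * indicator {x. r < a * x\<^sup>2} x * indicator {0..} x =
          ennreal (x * exp (- a * x\<^sup>2)) * indicator {c..} x"
        by (auto split: split_indicator)
    qed
  qed
  also have "(\<integral>\<^sup>+x. ennreal (x * exp (- a * x\<^sup>2)) * indicator {c..} x \<partial>lborel) =
      ennreal (0 - (- exp (- a * c\<^sup>2) / (2 * a)))"
  proof (rule nn_integral_FTC_atLeast)
    fix x assume "c \<le> x"
    show "((\<lambda>x. - exp (- a * x\<^sup>2) / (2 * a)) has_real_derivative x * exp (- a * x\<^sup>2)) (at x)"
      using a by (auto intro!: derivative_eq_intros simp: field_simps)
    show "0 \<le> x * exp (- a * x\<^sup>2)" using \<open>c \<le> x\<close> c by simp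
  next
    have "((\<lambda>x. - exp (- a * x\<^sup>2) / (2 * a)) \<longlongrightarrow> - 0 / (2 * a)) at_top"
      using a
      by (intro tendsto_intros filterlim_compose[OF exp_at_bot] filterlim_tendsto_neg_mult_at_bot[OF tendsto_const]
          filterlim_pow_at_top filterlim_ident) auto
    then show "((\<lambda>x. - exp (- a * x\<^sup>2) / (2 * a)) \<longlongrightarrow> 0) at_top" by simp
  qed simp
  finally show ?thesis using c a by (simp add: two_ennreal)
qed

lemma integral_abs_gauss_tail':
  fixes a r :: real
  assumes a: "a > 0" and r: "r \<ge> 0"
  shows "(\<integral>\<^sup>+x. ennreal (\<bar>x\<bar> * exp (- (a * x\<^sup>2))) * indicator {x. r < a * x\<^sup>2} x \<partial>lborel) = ennreal (exp (- r) / a)"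
  using integral_abs_gauss_tail[OF a r] by simp

lemma nd_half: "normal_density 0 (sqrt (1/2)) x = exp (- x\<^sup>2) / sqrt pi"
  by (simp add: normal_density_def power2_eq_square real_sqrt_mult)

lemma gauss2_tail_K:
  fixes r :: real assumes r: "r \<ge> 0"
  shows "(\<integral>\<^sup>+x. \<integral>\<^sup>+y. ennreal (exp (- (x\<^sup>2 + y\<^sup>2))) * indicator {y. r < x\<^sup>2 + y\<^sup>2} y \<partial>lborel \<partial>lborel)
      = ennreal (pi * exp (- r))"
proof -
  let ?h = "\<lambda>x y. ennreal (exp (- (x\<^sup>2 + y\<^sup>2))) * indicator {y. r < x\<^sup>2 + y\<^sup>2} y"
  let ?k = "\<lambda>x s. ennreal (\<bar>x\<bar> * exp (- ((1 + s\<^sup>2) * x\<^sup>2))) * indicator {x. r < (1 + s\<^sup>2) * x\<^sup>2} x"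
  have "(\<integral>\<^sup>+x. \<integral>\<^sup>+y. ?h x y \<partial>lborel \<partial>lborel) = (\<integral>\<^sup>+x. \<integral>\<^sup>+s. ?k x s \<partial>lborel \<partial>lborel)"
  proof (rule nn_integral_cong_AE)
    show "AE x in lborel. (\<integral>\<^sup>+y. ?h x y \<partial>lborel) = (\<integral>\<^sup>+s. ?k x s \<partial>lborel)"
      using AE_lborel_singleton[of 0]
    proof eventually_elim
      fix x :: real assume x: "x \<noteq> 0"
      have "(\<integral>\<^sup>+y. ?h x y \<partial>lborel) = ennreal \<bar>x\<bar> * (\<integral>\<^sup>+s. ?h x (0 + x * s) \<partial>lborel)"
        by (rule nn_integral_real_affine) (use x in auto)
      also have "\<dots> = (\<integral>\<^sup>+s. ennreal \<bar>x\<bar> * ?h x (x * s) \<partial>lborel)"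
        by (simp add: nn_integral_cmult)
      also have "\<dots> = (\<integral>\<^sup>+s. ?k x s \<partial>lborel)"
      proof (rule nn_integral_cong)
        fix s :: real
        have e: "x\<^sup>2 + (x * s)\<^sup>2 = (1 + s\<^sup>2) * x\<^sup>2" by (simp add: power_mult_distrib algebra_simps)
        show "ennreal \<bar>x\<bar> * ?h x (x * s) = ?k x s"
          by (simp add: e ennreal_mult[symmetric] split: split_indicator)
      qed
      finally show "(\<integral>\<^sup>+y. ?h x y \<partial>lborel) = (\<integral>\<^sup>+s. ?k x s \<partial>lborel)" .
    qed
  qed
  also have "\<dots> = (\<integral>\<^sup>+s. \<integral>\<^sup>+x. ?k x s \<partial>lborel \<partial>lborel)"
    by (rule lborel_pair.Fubini') simp
  also have "\<dots> = (\<integral>\<^sup>+s. ennreal (exp (- r)) * ennreal (1 / (1 + s\<^sup>2)) \<partial>lborel)"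
  proof (rule nn_integral_cong)
    fix s :: real
    have a: "1 + s\<^sup>2 > 0" by (simp add: add_pos_nonneg)
    show "(\<integral>\<^sup>+x. ?k x s \<partial>lborel) = ennreal (exp (- r)) * ennreal (1 / (1 + s\<^sup>2))"
      using integral_abs_gauss_tail'[OF a r] a by (simp add: divide_inverse ennreal_mult)
  qed
  also have "\<dots> = ennreal (exp (- r)) * ennreal pi"
    by (simp add: nn_integral_cmult integral_arctan)
  finally show ?thesis by (simp add: ennreal_mult[symmetric] mult.commute)
qed

lemma gauss2_tail:
  fixes r :: real assumes r: "r \<ge> 0"
  shows "emeasure (nmeas (sqrt (1/2)) \<Otimes>\<^sub>M nmeas (sqrt (1/2))) {p. r < (fst p)\<^sup>2 + (snd p)\<^sup>2} = ennreal (exp (- r))"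
proof -
  let ?N = "nmeas (sqrt (1/2))"
  interpret N: prob_space ?N by (rule prob_space_nmeas) simp
  let ?c = "1 / sqrt pi"
  have Am: "{p. r < (fst p)\<^sup>2 + (snd p)\<^sup>2} \<in> sets (?N \<Otimes>\<^sub>M ?N)"
  proof -
    have "{p \<in> space (borel \<Otimes>\<^sub>M (borel :: real measure)). r < (fst p)\<^sup>2 + (snd p)\<^sup>2} \<in> sets (borel \<Otimes>\<^sub>M (borel :: real measure))" by measurable
    then show ?thesis by (simp add: sets_pair_measure_cong[OF sets_nmeas sets_nmeas] space_pair_measure)
  qed
  have "emeasure (?N \<Otimes>\<^sub>M ?N) {p. r < (fst p)\<^sup>2 + (snd p)\<^sup>2} =
      (\<integral>\<^sup>+x. emeasure ?N (Pair x -` {p. r < (fst p)\<^sup>2 + (snd p)\<^sup>2}) \<partial>?N)"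
    by (rule N.emeasure_pair_measure_alt[OF Am])
  also have "\<dots> = (\<integral>\<^sup>+x. ennreal (?c * exp (- x\<^sup>2)) *
      (\<integral>\<^sup>+y. ennreal (?c * exp (- y\<^sup>2)) * indicator {y. r < x\<^sup>2 + y\<^sup>2} y \<partial>lborel) \<partial>lborel)"
    unfolding nmeas_def
    by (simp add: nn_integral_density emeasure_density nd_half vimage_def)
  also have "\<dots> = (\<integral>\<^sup>+x. ennreal (?c * ?c) * (\<integral>\<^sup>+y. ennreal (exp (- (x\<^sup>2 + y\<^sup>2))) * indicator {y. r < x\<^sup>2 + y\<^sup>2} y \<partial>lborel) \<partial>lborel)"
  proof (rule nn_integral_cong)
    fix x :: real
    have "ennreal (?c * exp (- x\<^sup>2)) * (\<integral>\<^sup>+y. ennreal (?c * exp (- y\<^sup>2)) * indicator {y. r < x\<^sup>2 + y\<^sup>2} y \<partial>lborel)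
       = (\<integral>\<^sup>+y. ennreal (?c * exp (- x\<^sup>2)) * (ennreal (?c * exp (- y\<^sup>2)) * indicator {y. r < x\<^sup>2 + y\<^sup>2} y) \<partial>lborel)"
      by (simp add: nn_integral_cmult)
    also have "\<dots> = (\<integral>\<^sup>+y. ennreal (?c * ?c) * (ennreal (exp (- (x\<^sup>2 + y\<^sup>2))) * indicator {y. r < x\<^sup>2 + y\<^sup>2} y) \<partial>lborel)"
    proof (rule nn_integral_cong)
      fix y :: real
      have "(?c * exp (- x\<^sup>2)) * (?c * exp (- y\<^sup>2)) = (?c * ?c) * exp (- (x\<^sup>2 + y\<^sup>2))"
      proof -
        have e12: "exp (- (x\<^sup>2 + y\<^sup>2)) = exp (- x\<^sup>2) * exp (- y\<^sup>2)" by (simp only: minus_add_distrib exp_add)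
        show ?thesis by (simp only: e12 mult_ac)
      qed
      then show "ennreal (?c * exp (- x\<^sup>2)) * (ennreal (?c * exp (- y\<^sup>2)) * indicator {y. r < x\<^sup>2 + y\<^sup>2} y) =
          ennreal (?c * ?c) * (ennreal (exp (- (x\<^sup>2 + y\<^sup>2))) * indicator {y. r < x\<^sup>2 + y\<^sup>2} y)"
        by (simp add: mult.assoc[symmetric] ennreal_mult[symmetric] del: ennreal_mult_left_cong)
    qed
    also have "\<dots> = ennreal (?c * ?c) * (\<integral>\<^sup>+y. ennreal (exp (- (x\<^sup>2 + y\<^sup>2))) * indicator {y. r < x\<^sup>2 + y\<^sup>2} y \<partial>lborel)"
      by (simp add: nn_integral_cmult)
    finally show "ennreal (?c * exp (- x\<^sup>2)) * (\<integral>\<^sup>+y. ennreal (?c * exp (- y\<^sup>2)) * indicator {y. r < x\<^sup>2 + y\<^sup>2} y \<partial>lborel)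
       = ennreal (?c * ?c) * (\<integral>\<^sup>+y. ennreal (exp (- (x\<^sup>2 + y\<^sup>2))) * indicator {y. r < x\<^sup>2 + y\<^sup>2} y \<partial>lborel)" .
  qed
  also have "\<dots> = ennreal (?c * ?c) * ennreal (pi * exp (- r))"
    using gauss2_tail_K[OF r] by (simp add: nn_integral_cmult)
  also have "\<dots> = ennreal (exp (- r))"
    by (simp add: ennreal_mult[symmetric])
  finally show ?thesis .
qed

lemma gauss_mgf:
  fixes l :: real assumes l: "l \<ge> 0"
  shows "(\<integral>\<^sup>+z. ennreal (exp (- l * z\<^sup>2)) \<partial>nmeas (sqrt (1/2))) = ennreal (1 / sqrt (1 + l))"
proof -
  define s where "s = sqrt (1 / (2 * (1 + l)))"
  have s: "s > 0" using l by (simp add: s_def)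
  define q where "q = 1 + l"
  have q: "q > 0" using l by (simp add: q_def)
  have pt: "exp (- z\<^sup>2) / sqrt pi * exp (- l * z\<^sup>2) = normal_density 0 s z * (1 / sqrt (1 + l))" for z
  proof -
    have s2: "s\<^sup>2 = 1 / (2 * q)" using l by (simp add: s_def q_def)
    have a1: "2 * s\<^sup>2 = 1 / q" using s2 q by simp
    have a3: "2 * pi * s\<^sup>2 = pi / q" using s2 q by simp
    have a2: "- (z - 0)\<^sup>2 / (2 * s\<^sup>2) = - (q * z\<^sup>2)" using a1 q by simp
    have nd: "normal_density 0 s z = 1 / sqrt (pi / q) * exp (- (q * z\<^sup>2))"
      unfolding normal_density_def a3 a2 ..
    have e1: "exp (- z\<^sup>2) * exp (- l * z\<^sup>2) = exp (- (q * z\<^sup>2))"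
      by (simp add: exp_add[symmetric] q_def algebra_simps)
    have e2: "sqrt (pi / q) * sqrt q = sqrt pi"
      using q by (simp add: real_sqrt_divide)
    have "normal_density 0 s z * (1 / sqrt (1 + l)) = exp (- (q * z\<^sup>2)) / (sqrt (pi / q) * sqrt q)"
      unfolding nd q_def[symmetric] by simp
    also have "\<dots> = exp (- (q * z\<^sup>2)) / sqrt pi" by (simp only: e2)
    also have "\<dots> = exp (- z\<^sup>2) / sqrt pi * exp (- l * z\<^sup>2)"
      using e1 by simp
    finally show ?thesis by simp
  qed
  have "(\<integral>\<^sup>+z. ennreal (exp (- l * z\<^sup>2)) \<partial>nmeas (sqrt (1/2))) =
      (\<integral>\<^sup>+z. ennreal (exp (- z\<^sup>2) / sqrt pi) * ennreal (exp (- l * z\<^sup>2)) \<partial>lborel)"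
    unfolding nmeas_def by (simp add: nn_integral_density nd_half)
  also have "\<dots> = (\<integral>\<^sup>+z. ennreal (normal_density 0 s z) * ennreal (1 / sqrt (1 + l)) \<partial>lborel)"
  proof (rule nn_integral_cong)
    fix z :: real
    have "ennreal (exp (- z\<^sup>2) / sqrt pi) * ennreal (exp (- l * z\<^sup>2)) = ennreal (exp (- z\<^sup>2) / sqrt pi * exp (- l * z\<^sup>2))"
      by (rule ennreal_mult[symmetric]) simp_all
    also have "\<dots> = ennreal (normal_density 0 s z * (1 / sqrt (1 + l)))" by (simp only: pt)
    also have "\<dots> = ennreal (normal_density 0 s z) * ennreal (1 / sqrt (1 + l))"
      by (rule ennreal_mult) (use l in simp_all)
    finally show "ennreal (exp (- z\<^sup>2) / sqrt pi) * ennreal (exp (- l * z\<^sup>2)) = ennreal (normal_density 0 s z) * ennreal (1 / sqrt (1 + l))" .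
  qed
  also have "\<dots> = (\<integral>\<^sup>+z. ennreal (normal_density 0 s z) \<partial>lborel) * ennreal (1 / sqrt (1 + l))"
    by (simp add: nn_integral_multc)
  also have "(\<integral>\<^sup>+z. ennreal (normal_density 0 s z) \<partial>lborel) = 1"
  proof -
    interpret prob_space "density lborel (normal_density 0 s)" by (rule prob_space_normal_density[OF s])
    have "emeasure (density lborel (normal_density 0 s)) UNIV = 1" using emeasure_space_1 by simp
    then show ?thesis by (simp add: emeasure_density)
  qed
  finally show ?thesis by simp
qed

lemma tail_J2:
  fixes A C :: real assumes A: "A > 0" and C: "C \<ge> 0"
  shows "emeasure (PiM {0, 1::nat} (\<lambda>_. nmeas (sqrt (1/2)))) {z \<in> space (PiM {0, 1::nat} (\<lambda>_. nmeas (sqrt (1/2)))). C < A * ((z 0)\<^sup>2 + (z 1)\<^sup>2)}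
      = ennreal (exp (- (C / A)))"
proof -
  let ?N = "nmeas (sqrt (1/2))"
  interpret N: prob_space ?N by (rule prob_space_nmeas) simp
  interpret P: product_sigma_finite "\<lambda>_::nat. ?N"
    unfolding product_sigma_finite_def by (simp add: N.sigma_finite_measure_axioms)
  let ?S = "{z \<in> space (PiM {0, 1::nat} (\<lambda>_. ?N)). C < A * ((z 0)\<^sup>2 + (z 1)\<^sup>2)}"
  have m01: "(\<lambda>x. x i) \<in> borel_measurable (PiM {0, 1::nat} (\<lambda>_. ?N))" if "i \<in> {0, 1::nat}" for i
  proof -
    have "(\<lambda>x. x i) \<in> measurable (PiM {0, 1::nat} (\<lambda>_. ?N)) ?N"
      by (rule measurable_component_singleton) (use that in simp)
    moreover have "measurable (PiM {0, 1::nat} (\<lambda>_. ?N)) ?N = borel_measurable (PiM {0, 1::nat} (\<lambda>_. ?N))"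
      by (rule measurable_cong_sets) simp_all
    ultimately show ?thesis by simp
  qed
  have [measurable]: "(\<lambda>x. x 0) \<in> borel_measurable (PiM {0, 1::nat} (\<lambda>_. ?N))"
    "(\<lambda>x. x 1) \<in> borel_measurable (PiM {0, 1::nat} (\<lambda>_. ?N))" using m01 by auto
  have Sm: "?S \<in> sets (PiM {0, 1::nat} (\<lambda>_. ?N))" by measurable
  let ?T = "{p. C / A < (fst p)\<^sup>2 + (snd p)\<^sup>2} :: (real \<times> real) set"
  have Tm: "?T \<in> sets (?N \<Otimes>\<^sub>M ?N)"
  proof -
    have "{p \<in> space (borel \<Otimes>\<^sub>M (borel :: real measure)). C / A < (fst p)\<^sup>2 + (snd p)\<^sup>2} \<in> sets (borel \<Otimes>\<^sub>M (borel :: real measure))" by measurable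
    then show ?thesis by (simp add: sets_pair_measure_cong[OF sets_nmeas sets_nmeas] space_pair_measure)
  qed
  have "emeasure (PiM {0, 1::nat} (\<lambda>_. ?N)) ?S = (\<integral>\<^sup>+z. indicator ?S z \<partial>PiM {0, 1::nat} (\<lambda>_. ?N))"
    by (rule nn_integral_indicator[symmetric, OF Sm])
  also have "\<dots> = (\<integral>\<^sup>+z. indicator ?T (z 0, z 1) \<partial>PiM {0, 1::nat} (\<lambda>_. ?N))"
  proof (rule nn_integral_cong)
    fix z assume "z \<in> space (PiM {0, 1::nat} (\<lambda>_. ?N))"
    moreover have "C < A * ((z 0)\<^sup>2 + (z 1)\<^sup>2) \<longleftrightarrow> C / A < (z 0)\<^sup>2 + (z 1)\<^sup>2"
      using A by (simp add: pos_divide_less_eq mult.commute)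
    ultimately show "indicator ?S z = indicator ?T (z 0, z 1)"
      by (simp add: indicator_def)
  qed
  also have "\<dots> = (\<integral>\<^sup>+p. indicator {p. C / A < (fst p)\<^sup>2 + (snd p)\<^sup>2} (fst p, snd p) \<partial>(?N \<Otimes>\<^sub>M ?N))"
  proof (rule P.product_nn_integral_pair[where f="\<lambda>x y. indicator ?T (x, y)"])
    have "case_prod (\<lambda>x y. indicator ?T (x, y)) = (indicator ?T :: real \<times> real \<Rightarrow> ennreal)"
      by (simp add: fun_eq_iff)
    then show "case_prod (\<lambda>x y. indicator ?T (x, y)) \<in> borel_measurable (?N \<Otimes>\<^sub>M ?N)"
      using borel_measurable_indicator[OF Tm] by simp
  qed simp
  also have "\<dots> = emeasure (?N \<Otimes>\<^sub>M ?N) {p. C / A < (fst p)\<^sup>2 + (snd p)\<^sup>2}"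
    using nn_integral_indicator[OF Tm] by simp
  also have "\<dots> = ennreal (exp (- (C / A)))"
    by (rule gauss2_tail) (use A C in simp)
  finally show ?thesis .
qed

lemma nmeas_measurable:
  fixes f :: "real \<Rightarrow> 'b::topological_space"
  assumes "f \<in> borel_measurable borel"
  shows "f \<in> borel_measurable (nmeas \<sigma>)"
proof -
  have "measurable (nmeas \<sigma>) (borel :: 'b measure) = measurable borel borel"
    by (rule measurable_cong_sets) simp_all
  then show ?thesis using assms by simp
qed

lemma comp_meas:
  fixes K :: "'i set" assumes "i \<in> K"
  shows "(\<lambda>x. x i) \<in> borel_measurable (PiM K (\<lambda>_. nmeas \<sigma>))"
proof -
  have "(\<lambda>x. x i) \<in> measurable (PiM K (\<lambda>_. nmeas \<sigma>)) (nmeas \<sigma>)"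
    by (rule measurable_component_singleton) (use assms in simp)
  moreover have "measurable (PiM K (\<lambda>_. nmeas \<sigma>)) (nmeas \<sigma>) = borel_measurable (PiM K (\<lambda>_. nmeas \<sigma>))"
    by (rule measurable_cong_sets) simp_all
  ultimately show ?thesis by simp
qed

lemma tail_J4:
  fixes A B C :: real assumes A: "A > 0" and B: "B \<ge> 0" and C: "C \<ge> 0"
  shows "emeasure (PiM {0, 1, 2, 3::nat} (\<lambda>_. nmeas (sqrt (1/2))))
      {z \<in> space (PiM {0, 1, 2, 3::nat} (\<lambda>_. nmeas (sqrt (1/2)))). B * ((z 2)\<^sup>2 + (z 3)\<^sup>2) + C < A * ((z 0)\<^sup>2 + (z 1)\<^sup>2)}
      = ennreal (A / (A + B) * exp (- (C / A)))"
proof -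
  let ?N = "nmeas (sqrt (1/2))"
  interpret N: prob_space ?N by (rule prob_space_nmeas) simp
  interpret P: product_sigma_finite "\<lambda>_::nat. ?N"
    unfolding product_sigma_finite_def by (simp add: N.sigma_finite_measure_axioms)
  define I where "I = {2, 3::nat}"
  define J where "J = {0, 1::nat}"
  have U: "{0, 1, 2, 3::nat} = I \<union> J" unfolding I_def J_def by auto
  have IJ: "I \<inter> J = {}" "finite I" "finite J" unfolding I_def J_def by auto
  let ?P = "\<lambda>z::nat \<Rightarrow> real. B * ((z 2)\<^sup>2 + (z 3)\<^sup>2) + C < A * ((z 0)\<^sup>2 + (z 1)\<^sup>2)"
  let ?S = "{z \<in> space (PiM (I \<union> J) (\<lambda>_. ?N)). ?P z}"
  have [measurable]: "(\<lambda>x. x i) \<in> borel_measurable (PiM (I \<union> J) (\<lambda>_. ?N))" if "i \<in> I \<union> J" for i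
    using comp_meas[OF that] .
  have c0: "(0::nat) \<in> I \<union> J" "(1::nat) \<in> I \<union> J" "(2::nat) \<in> I \<union> J" "(3::nat) \<in> I \<union> J"
    unfolding I_def J_def by auto
  have Sm: "?S \<in> sets (PiM (I \<union> J) (\<lambda>_. ?N))"
    using c0 by measurable
  have "emeasure (PiM (I \<union> J) (\<lambda>_. ?N)) ?S = (\<integral>\<^sup>+z. indicator ?S z \<partial>PiM (I \<union> J) (\<lambda>_. ?N))"
    by (rule nn_integral_indicator[symmetric, OF Sm])
  also have "\<dots> = (\<integral>\<^sup>+x. (\<integral>\<^sup>+y. indicator ?S (merge I J (x, y)) \<partial>PiM J (\<lambda>_. ?N)) \<partial>PiM I (\<lambda>_. ?N))"
    by (rule P.product_nn_integral_fold[OF IJ]) (use Sm in simp)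
  also have "\<dots> = (\<integral>\<^sup>+x. ennreal (exp (- ((B * ((x 2)\<^sup>2 + (x 3)\<^sup>2) + C) / A))) \<partial>PiM I (\<lambda>_. ?N))"
  proof (rule nn_integral_cong)
    fix x assume x: "x \<in> space (PiM I (\<lambda>_. ?N))"
    define C' where "C' = B * ((x 2)\<^sup>2 + (x 3)\<^sup>2) + C"
    have C': "C' \<ge> 0" unfolding C'_def using B C by simp
    let ?SJ = "{y \<in> space (PiM J (\<lambda>_. ?N)). C' < A * ((y 0)\<^sup>2 + (y 1)\<^sup>2)}"
    have SJm: "?SJ \<in> sets (PiM J (\<lambda>_. ?N))"
    proof -
      have [measurable]: "(\<lambda>x. x i) \<in> borel_measurable (PiM J (\<lambda>_. ?N))" if "i \<in> J" for i
        using comp_meas[OF that] .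
      have "(0::nat) \<in> J" "(1::nat) \<in> J" unfolding J_def by auto
      then show ?thesis by measurable
    qed
    have "(\<integral>\<^sup>+y. indicator ?S (merge I J (x, y)) \<partial>PiM J (\<lambda>_. ?N)) = (\<integral>\<^sup>+y. indicator ?SJ y \<partial>PiM J (\<lambda>_. ?N))"
    proof (rule nn_integral_cong)
      fix y assume y: "y \<in> space (PiM J (\<lambda>_. ?N))"
      have sp: "merge I J (x, y) \<in> space (PiM (I \<union> J) (\<lambda>_. ?N))"
        using x y by (auto simp: space_PiM PiE_iff extensional_merge_sub)
      have m: "merge I J (x, y) 0 = y 0 \<and> merge I J (x, y) 1 = y 1 \<and>
        merge I J (x, y) 2 = x 2 \<and> merge I J (x, y) 3 = x 3"
        unfolding I_def J_def by (auto simp: merge_def)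
      show "indicator ?S (merge I J (x, y)) = indicator ?SJ y"
        using sp y m by (simp add: indicator_def C'_def)
    qed
    also have "\<dots> = emeasure (PiM J (\<lambda>_. ?N)) ?SJ"
      by (rule nn_integral_indicator[OF SJm])
    also have "\<dots> = ennreal (exp (- (C' / A)))"
      unfolding J_def by (rule tail_J2[OF A C'])
    finally show "(\<integral>\<^sup>+y. indicator ?S (merge I J (x, y)) \<partial>PiM J (\<lambda>_. ?N)) =
        ennreal (exp (- ((B * ((x 2)\<^sup>2 + (x 3)\<^sup>2) + C) / A)))" unfolding C'_def .
  qed
  also have "\<dots> = (\<integral>\<^sup>+x. ennreal (exp (- (C / A))) * (\<Prod>i\<in>I. ennreal (exp (- (B / A) * (x i)\<^sup>2))) \<partial>PiM I (\<lambda>_. ?N))"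
  proof (rule nn_integral_cong)
    fix x :: "nat \<Rightarrow> real"
    have "exp (- ((B * ((x 2)\<^sup>2 + (x 3)\<^sup>2) + C) / A)) = exp (- (C / A)) * (exp (- (B / A) * (x 2)\<^sup>2) * exp (- (B / A) * (x 3)\<^sup>2))"
      using A by (simp add: exp_add[symmetric] field_simps)
    then show "ennreal (exp (- ((B * ((x 2)\<^sup>2 + (x 3)\<^sup>2) + C) / A))) = ennreal (exp (- (C / A))) * (\<Prod>i\<in>I. ennreal (exp (- (B / A) * (x i)\<^sup>2)))"
      unfolding I_def by (simp add: ennreal_mult[symmetric])
  qed
  also have "\<dots> = ennreal (exp (- (C / A))) * (\<integral>\<^sup>+x. (\<Prod>i\<in>I. ennreal (exp (- (B / A) * (x i)\<^sup>2))) \<partial>PiM I (\<lambda>_. ?N))"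
  proof (rule nn_integral_cmult, rule borel_measurable_prod_ennreal)
    fix i assume "i \<in> I"
    note [measurable] = comp_meas[OF this, of "sqrt (1/2)"]
    show "(\<lambda>x. ennreal (exp (- (B / A) * (x i)\<^sup>2))) \<in> borel_measurable (PiM I (\<lambda>_. ?N))" by measurable
  qed
  also have "(\<integral>\<^sup>+x. (\<Prod>i\<in>I. ennreal (exp (- (B / A) * (x i)\<^sup>2))) \<partial>PiM I (\<lambda>_. ?N))
      = (\<Prod>i\<in>I. (\<integral>\<^sup>+t. ennreal (exp (- (B / A) * t\<^sup>2)) \<partial>?N))"
    by (rule P.product_nn_integral_prod) (use IJ in \<open>auto intro!: nmeas_measurable\<close>)
  also have "\<dots> = (\<Prod>i\<in>I. ennreal (1 / sqrt (1 + B / A)))"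
    using gauss_mgf[of "B / A"] A B by simp
  also have "\<dots> = ennreal (1 / (1 + B / A))"
    unfolding I_def using A B by (simp add: ennreal_mult[symmetric])
  finally have "emeasure (PiM (I \<union> J) (\<lambda>_. ?N)) ?S = ennreal (exp (- (C / A))) * ennreal (1 / (1 + B / A))" .
  also have "\<dots> = ennreal (A / (A + B) * exp (- (C / A)))"
    using A B by (simp add: ennreal_mult[symmetric] field_simps)
  finally show ?thesis unfolding U .
qed

lemma cdot_add_right: "cdot x (y + z) = cdot x y + cdot x z"
  by (simp add: cdot_def distrib_left sum.distrib)
lemma cdot_diff_right: "cdot x (y - z) = cdot x y - cdot x z"
  by (simp add: cdot_def right_diff_distrib sum_subtractf)
lemma cdot_add_left: "cdot (x + y) z = cdot x z + cdot y z"
  by (simp add: cdot_def distrib_right sum.distrib)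
lemma cdot_diff_left: "cdot (x - y) z = cdot x z - cdot y z"
  by (simp add: cdot_def left_diff_distrib sum_subtractf)
lemma cdot_scale_right: "cdot x (c *s y) = c * cdot x y"
  by (simp add: cdot_def sum_distrib_left mult_ac)
lemma cdot_scale_left: "cdot (c *s x) y = cnj c * cdot x y"
  by (simp add: cdot_def sum_distrib_left mult_ac)
lemma cdot_swap: "cdot y x = cnj (cdot x y)"
  by (simp add: cdot_def mult.commute)
lemma cdot_self: "cdot y y = complex_of_real ((norm y)\<^sup>2)"
proof -
  have "cdot y y = (\<Sum>i\<in>UNIV. complex_of_real ((cmod (y $ i))\<^sup>2))"
    unfolding cdot_def by (rule sum.cong) (simp_all, metis complex_norm_square of_real_power mult.commute)
  also have "\<dots> = complex_of_real (\<Sum>i\<in>UNIV. (cmod (y $ i))\<^sup>2)" by simp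
  also have "(\<Sum>i\<in>UNIV. (cmod (y $ i))\<^sup>2) = (norm y)\<^sup>2"
    unfolding norm_vec_def L2_set_def by (simp add: sum_nonneg)
  finally show ?thesis .
qed


lemma polar_id: "(cmod (a + b))\<^sup>2 - (cmod (a - b))\<^sup>2 = 4 * Re (cnj a * b)"
  unfolding cmod_power2 by (simp add: power2_eq_square algebra_simps)

lemma rinner_Q: "rinner (cdot a xs *s a) h = Re (cnj (cdot a xs) * cdot a h)"
  unfolding rinner_def by (simp add: cdot_scale_left)

lemma Q_ident:
  fixes xs h a :: "complex ^ 'n::finite" and m :: real
  assumes m: "m > 0"
  defines "h' \<equiv> h - (\<i> * complex_of_real (Im (cdot xs h))) *s xs"
  defines "y1 \<equiv> complex_of_real m *s xs + complex_of_real (1 / m) *s h'"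
  defines "y2 \<equiv> complex_of_real m *s xs - complex_of_real (1 / m) *s h'"
  shows "rinner (cdot a xs *s a) h = ((cmod (cdot a y1))\<^sup>2 - (cmod (cdot a y2))\<^sup>2) / 4"
proof -
  define u where "u = cdot a xs"
  define q where "q = cdot a h"
  have q': "cdot a h' = q - \<i> * complex_of_real (Im (cdot xs h)) * u"
    unfolding h'_def q_def u_def by (simp add: cdot_diff_right cdot_scale_right)
  have c1: "cdot a y1 = complex_of_real m * u + complex_of_real (1 / m) * cdot a h'"
    unfolding y1_def u_def by (simp add: cdot_add_right cdot_scale_right)
  have c2: "cdot a y2 = complex_of_real m * u - complex_of_real (1 / m) * cdot a h'"
    unfolding y2_def u_def by (simp add: cdot_diff_right cdot_scale_right)
  have "((cmod (cdot a y1))\<^sup>2 - (cmod (cdot a y2))\<^sup>2) / 4 =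
      Re (cnj (complex_of_real m * u) * (complex_of_real (1 / m) * cdot a h'))"
    unfolding c1 c2 polar_id by simp
  also have "\<dots> = Re (cnj u * cdot a h')"
    using m by (simp add: field_simps)
  also have "\<dots> = Re (cnj u * q)"
    unfolding q' by (simp add: algebra_simps)
  finally show ?thesis unfolding rinner_Q u_def q_def by simp
qed


lemma cdot_unit: "norm x = 1 \<Longrightarrow> cdot x x = 1"
  by (simp add: cdot_self)

lemma norm_sub_scale:
  assumes x: "norm x = 1"
  shows "(norm (h - c *s x))\<^sup>2 = (norm h)\<^sup>2 - 2 * Re (cnj c * cdot x h) + (cmod c)\<^sup>2"
proof -
  have "complex_of_real ((norm (h - c *s x))\<^sup>2) = cdot (h - c *s x) (h - c *s x)" by (simp add: cdot_self)
  also have "\<dots> = cdot h h - c * cdot h x - cnj c * cdot x h + cnj c * c * cdot x x"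
    by (simp add: cdot_diff_left cdot_diff_right cdot_scale_left cdot_scale_right algebra_simps)
  also have "\<dots> = complex_of_real ((norm h)\<^sup>2) - c * cnj (cdot x h) - cnj c * cdot x h + complex_of_real ((cmod c)\<^sup>2)"
  proof -
    have cc: "cnj c * c = complex_of_real ((cmod c)\<^sup>2)" by (metis complex_norm_square mult.commute)
    show ?thesis by (simp only: cdot_self[of h] cdot_swap[of h x] cc cdot_unit[OF x] mult_1_right)
  qed
  finally have "(norm (h - c *s x))\<^sup>2 = Re (complex_of_real ((norm h)\<^sup>2) - c * cnj (cdot x h) - cnj c * cdot x h + complex_of_real ((cmod c)\<^sup>2))"
    by (metis Re_complex_of_real)
  then show ?thesis by (simp add: algebra_simps)
qed

lemma y_facts:
  fixes xs h :: "complex ^ 'n::finite" and m :: real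
  assumes x: "norm xs = 1" and m: "m > 0"
  defines "h' \<equiv> h - (\<i> * complex_of_real (Im (cdot xs h))) *s xs"
  assumes mm: "m\<^sup>2 = norm h'"
  defines "y1 \<equiv> complex_of_real m *s xs + complex_of_real (1 / m) *s h'"
  defines "y2 \<equiv> complex_of_real m *s xs - complex_of_real (1 / m) *s h'"
  shows "(norm y1)\<^sup>2 = 2 * (norm h' + Re (cdot xs h))" "(norm y2)\<^sup>2 = 2 * (norm h' - Re (cdot xs h))"
    "cdot y1 y2 = 0"
proof -
  have xx: "cdot xs xs = 1" using cdot_unit[OF x] .
  have xh': "cdot xs h' = complex_of_real (Re (cdot xs h))"
    unfolding h'_def by (simp add: cdot_diff_right cdot_scale_right xx complex_eq_iff)
  have h'x: "cdot h' xs = complex_of_real (Re (cdot xs h))"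
    using xh' cdot_swap[of h' xs] by simp
  have h'h': "cdot h' h' = complex_of_real (m\<^sup>2 * m\<^sup>2)"
    unfolding cdot_self mm by (simp add: power2_eq_square)
  let ?A = "complex_of_real (Re (cdot xs h))"
  have m0: "complex_of_real m \<noteq> 0" using m by simp
  have e1: "cdot y1 y1 = complex_of_real (m * m) + ?A + ?A + complex_of_real (m\<^sup>2)"
    unfolding y1_def using m
    by (simp add: cdot_add_left cdot_add_right cdot_scale_left cdot_scale_right xx xh' h'x h'h' power2_eq_square field_simps m0)
  have e2: "cdot y2 y2 = complex_of_real (m * m) - ?A - ?A + complex_of_real (m\<^sup>2)"
    unfolding y2_def using m
    by (simp add: cdot_diff_left cdot_diff_right cdot_scale_left cdot_scale_right xx xh' h'x h'h' power2_eq_square field_simps m0)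
  have e3: "cdot y1 y2 = complex_of_real (m * m) - ?A + ?A - complex_of_real (m\<^sup>2)"
    unfolding y1_def y2_def using m
    by (simp add: cdot_add_left cdot_diff_right cdot_scale_left cdot_scale_right xx xh' h'x h'h' power2_eq_square field_simps m0)
  show "(norm y1)\<^sup>2 = 2 * (norm h' + Re (cdot xs h))"
    using e1 cdot_self[of y1] mm by (simp add: power2_eq_square complex_eq_iff)
  show "(norm y2)\<^sup>2 = 2 * (norm h' - Re (cdot xs h))"
    using e2 cdot_self[of y2] mm by (simp add: power2_eq_square complex_eq_iff)
  show "cdot y1 y2 = 0"
    using e3 by (simp add: power2_eq_square)
qed

definition Yr :: "complex ^ 'n \<Rightarrow> (real, ('n::finite \<times> bool) wo) vec" where
  "Yr y = (\<chi> k. case Rep_wo k of (i, c) \<Rightarrow> if c then Re (y $ i) else Im (y $ i))"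
definition Yi :: "complex ^ 'n \<Rightarrow> (real, ('n::finite \<times> bool) wo) vec" where
  "Yi y = (\<chi> k. case Rep_wo k of (i, c) \<Rightarrow> if c then Im (y $ i) else - Re (y $ i))"

lemma Yr_nth: "Yr y $ Abs_wo (i, c) = (if c then Re (y $ i) else Im (y $ i))"
  by (simp add: Yr_def Abs_wo_inverse)
lemma Yi_nth: "Yi y $ Abs_wo (i, c) = (if c then Im (y $ i) else - Re (y $ i))"
  by (simp add: Yi_def Abs_wo_inverse)

lemma sum_wo:
  fixes f :: "('n::finite \<times> bool) wo \<Rightarrow> 'b::comm_monoid_add"
  shows "(\<Sum>k\<in>UNIV. f k) = (\<Sum>i\<in>UNIV. f (Abs_wo (i, True)) + f (Abs_wo (i, False)))"
proof -
  have "(\<Sum>k\<in>UNIV. f k) = (\<Sum>j\<in>UNIV. f (Abs_wo j))"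
  proof -
    have "(UNIV :: ('n \<times> bool) wo set) = Abs_wo ` UNIV"
      by (metis type_definition.Abs_image type_definition_wo)
    moreover have "sum f (Abs_wo ` (UNIV :: ('n \<times> bool) set)) = sum (f \<circ> Abs_wo) UNIV"
      by (rule sum.reindex) (simp add: inj_on_def Abs_wo_inject)
    ultimately show ?thesis by (simp add: comp_def)
  qed
  also have "\<dots> = (\<Sum>j\<in>UNIV \<times> UNIV. f (Abs_wo j))" by simp
  also have "\<dots> = (\<Sum>i\<in>UNIV. \<Sum>c\<in>UNIV. f (Abs_wo (i, c)))"
    using sum.cartesian_product[of "\<lambda>i c. f (Abs_wo (i, c))" UNIV UNIV] by simp
  also have "\<dots> = (\<Sum>i\<in>UNIV. f (Abs_wo (i, True)) + f (Abs_wo (i, False)))"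
    by (simp add: UNIV_bool add.commute)
  finally show ?thesis .
qed

lemma inner_wo: "(x :: (real, ('n::finite \<times> bool) wo) vec) \<bullet> y =
    (\<Sum>i\<in>UNIV. x $ Abs_wo (i, True) * y $ Abs_wo (i, True) + x $ Abs_wo (i, False) * y $ Abs_wo (i, False))"
  unfolding inner_vec_def by (simp add: sum_wo)

lemma emb_Yr: "emb (g, g') \<bullet> Yr y = Re (cdot (avec g g') y)"
  by (simp add: inner_wo emb_nth Yr_nth cdot_def avec_def Re_sum)

lemma emb_Yi: "emb (g, g') \<bullet> Yi y = Im (cdot (avec g g') y)"
  by (simp add: inner_wo emb_nth Yi_nth cdot_def avec_def Im_sum algebra_simps sum_subtractf)

lemma Yr_Yr: "Yr y \<bullet> Yr z = Re (cdot y z)"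
  by (simp add: inner_wo Yr_nth cdot_def Re_sum)
lemma Yi_Yi: "Yi y \<bullet> Yi z = Re (cdot y z)"
  by (simp add: inner_wo Yi_nth cdot_def Re_sum add.commute)
lemma Yr_Yi: "Yr y \<bullet> Yi z = Im (cdot y z)"
  by (simp add: inner_wo Yr_nth Yi_nth cdot_def Im_sum algebra_simps)
lemma Yi_Yr: "Yi y \<bullet> Yr z = - Im (cdot y z)"
  by (simp add: inner_wo Yr_nth Yi_nth cdot_def Im_sum algebra_simps sum_negf[symmetric])

lemma norm_Yr: "norm (Yr y) = norm y"
proof -
  have "(norm (Yr y))\<^sup>2 = (norm y)\<^sup>2"
    using Yr_Yr[of y y] cdot_self[of y] by (simp add: power2_norm_eq_inner)
  then show ?thesis by simp
qed
lemma norm_Yi: "norm (Yi y) = norm y"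
proof -
  have "(norm (Yi y))\<^sup>2 = (norm y)\<^sup>2"
    using Yi_Yi[of y y] cdot_self[of y] by (simp add: power2_norm_eq_inner)
  then show ?thesis by simp
qed

lemma Yr_scale: "Yr (complex_of_real r *s y) = r *\<^sub>R Yr y"
  by (simp add: Yr_def vec_eq_iff split: prod.split)
lemma Yi_scale: "Yi (complex_of_real r *s y) = r *\<^sub>R Yi y"
  by (simp add: Yi_def vec_eq_iff split: prod.split)

lemma final_ineq:
  fixes \<delta> \<eta> t nh A I \<beta> \<rho> :: real
  assumes d: "0 < \<delta>" "\<delta> < 1" and eta: "\<eta> > 0" and t: "t > 0"
    and b: "\<beta> \<ge> 0" and r: "\<rho> \<ge> 0" and rr: "\<rho>\<^sup>2 = \<beta>\<^sup>2 + A\<^sup>2" and nn: "nh\<^sup>2 = \<rho>\<^sup>2 + I\<^sup>2"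
    and nh0: "nh \<ge> 0"
    and R: "\<delta> * \<bar>I\<bar> \<le> \<beta>" and C: "- sqrt (1 - \<delta>\<^sup>2) * \<beta> \<le> \<delta> * A"
    and big: "nh > 1 / (t * \<eta>)"
  shows "\<rho> > 0" "\<rho> + A > 0"
    "(\<rho> + A) / (2 * \<rho>) * exp (- (1 / (\<eta> * (\<rho> + A)))) \<ge> (1/2 - sqrt (1 - \<delta>\<^sup>2) / 2) * exp (- 2 * sqrt 2 * t / \<delta>\<^sup>2)"
proof -
  define s where "s = sqrt (1 - \<delta>\<^sup>2)"
  have dd: "\<delta>\<^sup>2 < 1" "\<delta>\<^sup>2 > 0" using d by (simp_all add: power_less_one_iff)
  have s0: "0 \<le> s" unfolding s_def using dd by simp
  have s1: "s < 1" unfolding s_def using dd by simp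
  have s2: "s\<^sup>2 = 1 - \<delta>\<^sup>2" unfolding s_def using dd by simp
  have tn: "t * \<eta> > 0" using t eta by simp
  have "1 / (t * \<eta>) > 0" using tn by simp
  then have nhpos: "nh > 0" using big by linarith
  show rpos: "\<rho> > 0"
  proof (rule ccontr)
    assume "\<not> \<rho> > 0"
    then have "\<rho> = 0" using r by simp
    then have "\<beta>\<^sup>2 + A\<^sup>2 = 0" using rr by simp
    then have "\<beta> = 0" by (simp add: sum_power2_eq_zero_iff)
    then have "\<delta> * \<bar>I\<bar> \<le> 0" using R by simp
    then have "\<bar>I\<bar> \<le> 0" using d by (simp add: mult_le_0_iff)
    then have "I = 0" by simp
    then have "nh\<^sup>2 = 0" using nn \<open>\<rho> = 0\<close> by simp
    then show False using nhpos by simp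
  qed
  have Alow: "A \<ge> - s * \<rho>"
  proof (cases "A \<ge> 0")
    case True
    have "s * \<rho> \<ge> 0" using s0 rpos by simp
    then show ?thesis using True by linarith
  next
    case False
    then have "\<delta> * (- A) \<le> s * \<beta>" using C unfolding s_def by simp
    moreover have "0 \<le> \<delta> * (- A)" using False d by (intro mult_nonneg_nonneg) auto
    ultimately have "(\<delta> * (- A))\<^sup>2 \<le> (s * \<beta>)\<^sup>2" by (intro power_mono)
    then have "\<delta>\<^sup>2 * A\<^sup>2 \<le> s\<^sup>2 * \<beta>\<^sup>2" by (simp add: power_mult_distrib)
    then have "\<delta>\<^sup>2 * A\<^sup>2 \<le> (1 - \<delta>\<^sup>2) * \<beta>\<^sup>2" using s2 by simp
    then have "A\<^sup>2 \<le> (1 - \<delta>\<^sup>2) * (\<beta>\<^sup>2 + A\<^sup>2)" by (simp add: algebra_simps)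
    then have "A\<^sup>2 \<le> (s * \<rho>)\<^sup>2" using rr s2 by (simp add: power_mult_distrib)
    then have "\<bar>A\<bar> \<le> \<bar>s * \<rho>\<bar>" by (simp add: abs_le_square_iff)
    then show ?thesis using s0 rpos by (simp add: abs_mult)
  qed
  have oms: "1 - s \<ge> \<delta>\<^sup>2 / 2"
  proof -
    have "(1 - s) * (1 + s) = \<delta>\<^sup>2" using s2 by (simp add: algebra_simps power2_eq_square)
    moreover have "1 + s \<le> 2" using s1 by simp
    moreover have "1 - s > 0" using s1 by simp
    ultimately have "\<delta>\<^sup>2 \<le> (1 - s) * 2" by (metis mult_left_mono less_imp_le)
    then show ?thesis by simp
  qed
  have rA: "\<rho> + A \<ge> (1 - s) * \<rho>" using Alow by (simp add: algebra_simps)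
  have "(1 - s) * \<rho> > 0" using s1 rpos by simp
  then show rApos: "\<rho> + A > 0" using rA by linarith
  have pref: "(\<rho> + A) / (2 * \<rho>) \<ge> 1/2 - s/2"
    using rA rpos by (simp add: field_simps)
  have key: "nh * \<delta>\<^sup>2 \<le> 2 * sqrt 2 * (\<rho> + A)"
  proof (cases "\<beta> \<le> \<delta> * \<rho>")
    case True
    have "I\<^sup>2 \<le> \<rho>\<^sup>2"
    proof -
      have "\<delta> * \<bar>I\<bar> \<le> \<delta> * \<rho>" using R True by simp
      then have "\<bar>I\<bar> \<le> \<rho>" using d by simp
      then show ?thesis using abs_le_square_iff[of I \<rho>] rpos by simp
    qed
    then have "nh\<^sup>2 \<le> (sqrt 2 * \<rho>)\<^sup>2" using nn by (simp add: power_mult_distrib)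
    then have nh1: "nh \<le> sqrt 2 * \<rho>" using rpos nh0 by (simp add: abs_le_square_iff[symmetric])
    have "nh * \<delta>\<^sup>2 \<le> sqrt 2 * \<rho> * \<delta>\<^sup>2" using nh1 by (simp add: mult_right_mono)
    also have "\<dots> \<le> sqrt 2 * \<rho> * (2 * (1 - s))" using oms rpos by (intro mult_left_mono) auto
    also have "\<dots> = 2 * sqrt 2 * ((1 - s) * \<rho>)" by (simp add: algebra_simps)
    also have "\<dots> \<le> 2 * sqrt 2 * (\<rho> + A)" by (intro mult_left_mono rA) auto
    finally show ?thesis .
  next
    case False
    have "\<delta> * \<rho> \<ge> 0" using d rpos by simp
    then have bpos: "\<beta> > 0" using False by linarith
    have Ib: "\<bar>I\<bar> \<le> \<beta> / \<delta>" using R d by (simp add: field_simps mult.commute)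
    have rb: "\<rho> \<le> \<beta> / \<delta>" using False d by (simp add: field_simps mult.commute)
    have "nh\<^sup>2 \<le> (\<beta> / \<delta>)\<^sup>2 + (\<beta> / \<delta>)\<^sup>2"
    proof -
      have "\<rho>\<^sup>2 \<le> (\<beta> / \<delta>)\<^sup>2" using rb rpos by (intro power_mono) auto
      moreover have "I\<^sup>2 \<le> (\<beta> / \<delta>)\<^sup>2" using Ib by (metis abs_le_square_iff abs_of_nonneg b d(1) divide_nonneg_pos less_imp_le)
      ultimately show ?thesis using nn by simp
    qed
    moreover have "(sqrt 2 * (\<beta> / \<delta>))\<^sup>2 = (\<beta> / \<delta>)\<^sup>2 + (\<beta> / \<delta>)\<^sup>2"
      by (simp only: power_mult_distrib real_sqrt_pow2[of 2])
    ultimately have "nh\<^sup>2 \<le> (sqrt 2 * (\<beta> / \<delta>))\<^sup>2" by simp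
    then have nh1: "nh \<le> sqrt 2 * (\<beta> / \<delta>)" using bpos d nh0 by (simp add: abs_le_square_iff[symmetric])
    have rmA: "\<rho> - A > 0"
    proof (rule ccontr)
      assume "\<not> \<rho> - A > 0"
      then have "A \<ge> \<rho>" by simp
      then have "A\<^sup>2 \<ge> \<rho>\<^sup>2" using rpos by (intro power_mono) auto
      moreover have "\<beta>\<^sup>2 > 0" using bpos by simp
      ultimately show False using rr by linarith
    qed
    have "(\<rho> + A) * (\<rho> - A) = \<beta>\<^sup>2" using rr by (simp add: algebra_simps power2_eq_square)
    moreover have "\<rho> - A \<le> 2 * \<rho>"
    proof -
      have "s * \<rho> \<le> 1 * \<rho>" using s1 rpos by (intro mult_right_mono) auto
      then show ?thesis using Alow by linarith
    qed
    ultimately have "\<beta>\<^sup>2 \<le> (\<rho> + A) * (2 * \<rho>)" using rApos by (metis mult_left_mono less_imp_le)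
    moreover have "\<beta> * \<delta> * \<rho> < \<beta>\<^sup>2" using False bpos by (simp add: power2_eq_square mult.commute)
    ultimately have "\<beta> * \<delta> * \<rho> \<le> (\<rho> + A) * (2 * \<rho>)" by simp
    then have bd: "\<beta> * \<delta> \<le> 2 * (\<rho> + A)" using rpos by (simp add: mult.commute mult.left_commute)
    have "nh * \<delta>\<^sup>2 \<le> sqrt 2 * (\<beta> / \<delta>) * \<delta>\<^sup>2" using nh1 by (intro mult_right_mono) auto
    also have "\<dots> = sqrt 2 * (\<beta> * \<delta>)" using d by (simp add: power2_eq_square)
    also have "\<dots> \<le> sqrt 2 * (2 * (\<rho> + A))" using bd by (intro mult_left_mono) auto
    finally show ?thesis by (simp add: algebra_simps)
  qed
  have expo: "1 / (\<eta> * (\<rho> + A)) \<le> 2 * sqrt 2 * t / \<delta>\<^sup>2"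
  proof -
    have A1: "1 < t * \<eta> * nh" using big tn by (simp add: pos_divide_less_eq mult.commute)
    have "t * \<eta> * nh * \<delta>\<^sup>2 \<le> t * \<eta> * (2 * sqrt 2 * (\<rho> + A))"
      using mult_left_mono[OF key, of "t * \<eta>"] tn by (simp add: mult.assoc)
    then have "t * \<eta> * nh \<le> t * \<eta> * (2 * sqrt 2 * (\<rho> + A)) / \<delta>\<^sup>2"
      using dd by (simp add: pos_le_divide_eq)
    also have "\<dots> = 2 * sqrt 2 * t / \<delta>\<^sup>2 * (\<eta> * (\<rho> + A))" by (simp add: field_simps)
    finally have "1 \<le> 2 * sqrt 2 * t / \<delta>\<^sup>2 * (\<eta> * (\<rho> + A))" using A1 by linarith
    then show ?thesis using eta rApos by (simp add: pos_divide_le_eq)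
  qed
  have "exp (- 2 * sqrt 2 * t / \<delta>\<^sup>2) \<le> exp (- (1 / (\<eta> * (\<rho> + A))))"
    using expo by simp
  then show "(\<rho> + A) / (2 * \<rho>) * exp (- (1 / (\<eta> * (\<rho> + A)))) \<ge> (1/2 - sqrt (1 - \<delta>\<^sup>2) / 2) * exp (- 2 * sqrt 2 * t / \<delta>\<^sup>2)"
    using pref s1 unfolding s_def[symmetric] by (intro mult_mono) auto
qed




lemma orthonormal_inj:
  assumes orth: "\<And>i j. i \<in> J \<Longrightarrow> j \<in> J \<Longrightarrow> i \<noteq> j \<Longrightarrow> v i \<bullet> v j = 0"
    and unit: "\<And>j. j \<in> J \<Longrightarrow> norm (v j :: 'a::real_inner) = 1"
  shows "inj_on v J"
proof (rule inj_onI, rule ccontr)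
  fix i j assume ij: "i \<in> J" "j \<in> J" "v i = v j" "i \<noteq> j"
  then have "v i \<bullet> v i = 0" using orth by metis
  then have "v i = 0" by simp
  then show False using unit[OF ij(1)] by simp
qed

lemma transport:
  fixes v :: "nat \<Rightarrow> (real, ('n::finite \<times> bool) wo) vec" and J :: "nat set"
  assumes J: "finite J"
    and orth: "\<And>i j. i \<in> J \<Longrightarrow> j \<in> J \<Longrightarrow> i \<noteq> j \<Longrightarrow> v i \<bullet> v j = 0"
    and unit: "\<And>j. j \<in> J \<Longrightarrow> norm (v j) = 1"
    and T: "{z \<in> space (PiM J (\<lambda>_. nmeas (sqrt (1/2)))). P z} \<in> sets (PiM J (\<lambda>_. nmeas (sqrt (1/2))))"
  shows "emeasure (PiM UNIV (\<lambda>_::'n. nmeas (sqrt (1/2))) \<Otimes>\<^sub>M PiM UNIV (\<lambda>_::'n. nmeas (sqrt (1/2))))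
      {p. P (\<lambda>j\<in>J. emb p \<bullet> v j)} = emeasure (PiM J (\<lambda>_. nmeas (sqrt (1/2)))) {z \<in> space (PiM J (\<lambda>_. nmeas (sqrt (1/2)))). P z}"
proof -
  let ?N = "nmeas (sqrt (1/2))"
  let ?\<Omega> = "PiM UNIV (\<lambda>_::'n. ?N) \<Otimes>\<^sub>M PiM UNIV (\<lambda>_::'n. ?N)"
  let ?L = "\<lambda>x. \<lambda>j\<in>J. x \<bullet> v j"
  let ?T = "{z \<in> space (PiM J (\<lambda>_. ?N)). P z}"
  have s0: "sqrt (1/2::real) > 0" by simp
  have em: "emb \<in> measurable ?\<Omega> borel" by (rule emb_measurable) simp
  have Lm: "?L \<in> measurable borel (PiM J (\<lambda>_. borel))"
    by (auto intro!: measurable_restrict)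
  have d1: "distr ?\<Omega> borel emb = gmeas (sqrt (1/2))" by (rule emb_distr[OF s0])
  have d2: "distr (gmeas (sqrt (1/2))) (PiM J (\<lambda>_. borel)) ?L = PiM J (\<lambda>_. ?N)"
    by (rule gmeas_PiM_orth[OF s0 J orthonormal_inj[OF orth unit] orth unit])
  have "distr ?\<Omega> (PiM J (\<lambda>_. borel)) (?L \<circ> emb) = distr (distr ?\<Omega> borel emb) (PiM J (\<lambda>_. borel)) ?L"
    by (rule distr_distr[OF Lm em, symmetric])
  also have "\<dots> = PiM J (\<lambda>_. ?N)" unfolding d1 d2 ..
  finally have d3: "distr ?\<Omega> (PiM J (\<lambda>_. borel)) (?L \<circ> emb) = PiM J (\<lambda>_. ?N)" .
  have Tb: "?T \<in> sets (PiM J (\<lambda>_. borel))"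
  proof -
    have "sets (PiM J (\<lambda>_. ?N)) = sets (PiM J (\<lambda>_. (borel :: real measure)))"
      by (rule sets_PiM_cong) simp_all
    then show ?thesis using T by simp
  qed
  have "emeasure (PiM J (\<lambda>_. ?N)) ?T = emeasure (distr ?\<Omega> (PiM J (\<lambda>_. borel)) (?L \<circ> emb)) ?T"
    unfolding d3 ..
  also have "\<dots> = emeasure ?\<Omega> ((?L \<circ> emb) -` ?T \<inter> space ?\<Omega>)"
    by (rule emeasure_distr[OF measurable_comp[OF em Lm] Tb])
  also have "(?L \<circ> emb) -` ?T \<inter> space ?\<Omega> = {p. P (\<lambda>j\<in>J. emb p \<bullet> v j)}"
    by (auto simp: space_pair_measure space_PiM PiE_iff)
  finally show ?thesis by simp
qed


lemma cmod_emb: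
  fixes y :: "complex ^ 'n::finite" and r :: real
  assumes r: "r > 0"
  shows "(cmod (cdot (avec g g') y))\<^sup>2 =
    r\<^sup>2 * ((emb (g, g') \<bullet> ((1 / r) *\<^sub>R Yr y))\<^sup>2 + (emb (g, g') \<bullet> ((1 / r) *\<^sub>R Yi y))\<^sup>2)"
proof -
  have "(cmod (cdot (avec g g') y))\<^sup>2 = (emb (g, g') \<bullet> Yr y)\<^sup>2 + (emb (g, g') \<bullet> Yi y)\<^sup>2"
    by (simp add: cmod_power2 emb_Yr emb_Yi)
  also have "\<dots> = r\<^sup>2 * ((emb (g, g') \<bullet> ((1 / r) *\<^sub>R Yr y))\<^sup>2 + (emb (g, g') \<bullet> ((1 / r) *\<^sub>R Yi y))\<^sup>2)"
    using r by (simp add: power2_eq_square field_simps)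
  finally show ?thesis .
qed

lemma unit_Yr: "norm y > 0 \<Longrightarrow> norm ((1 / norm y) *\<^sub>R Yr y) = 1"
  by (simp add: norm_Yr)
lemma unit_Yi: "norm y > 0 \<Longrightarrow> norm ((1 / norm y) *\<^sub>R Yi y) = 1"
  by (simp add: norm_Yi)
lemma Yr_Yi_self: "Yr y \<bullet> Yi y = 0"
  by (simp add: Yr_Yi cdot_self)

lemma event_measure:
  fixes y1 y2 :: "complex ^ 'n::finite" and C :: real
  assumes orth: "cdot y1 y2 = 0" and y1: "norm y1 > 0" and C: "C \<ge> 0"
  shows "emeasure (PiM UNIV (\<lambda>_::'n. nmeas (sqrt (1/2))) \<Otimes>\<^sub>M PiM UNIV (\<lambda>_::'n. nmeas (sqrt (1/2))))
      {p. (cmod (cdot (avec (fst p) (snd p)) y2))\<^sup>2 + C < (cmod (cdot (avec (fst p) (snd p)) y1))\<^sup>2}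
    = ennreal ((norm y1)\<^sup>2 / ((norm y1)\<^sup>2 + (norm y2)\<^sup>2) * exp (- (C / (norm y1)\<^sup>2)))"
proof -
  let ?N = "nmeas (sqrt (1/2))"
  let ?\<Omega> = "PiM UNIV (\<lambda>_::'n. ?N) \<Otimes>\<^sub>M PiM UNIV (\<lambda>_::'n. ?N)"
  define n1 where "n1 = norm y1"
  define n2 where "n2 = norm y2"
  define v0 where "v0 = (1 / n1) *\<^sub>R Yr y1"
  define v1 where "v1 = (1 / n1) *\<^sub>R Yi y1"
  have n1: "n1 > 0" using y1 by (simp add: n1_def)
  have v0u: "norm v0 = 1" and v1u: "norm v1 = 1" using y1 by (simp_all add: v0_def v1_def n1_def norm_Yr norm_Yi)
  have v01: "v0 \<bullet> v1 = 0" by (simp add: v0_def v1_def Yr_Yi_self)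
  have c1: "(cmod (cdot (avec g g') y1))\<^sup>2 = n1\<^sup>2 * ((emb (g, g') \<bullet> v0)\<^sup>2 + (emb (g, g') \<bullet> v1)\<^sup>2)" for g g'
    unfolding v0_def v1_def by (rule cmod_emb[OF n1])
  show ?thesis
  proof (cases "n2 = 0")
    case True
    then have y20: "y2 = 0" by (simp add: n2_def)
    define v where "v j = (if j = (0::nat) then v0 else v1)" for j
    define J where "J = {0, 1::nat}"
    have J: "finite J" by (simp add: J_def)
    have orthv: "\<And>i j. i \<in> J \<Longrightarrow> j \<in> J \<Longrightarrow> i \<noteq> j \<Longrightarrow> v i \<bullet> v j = 0"
      using v01 by (auto simp: J_def v_def inner_commute)
    have unitv: "\<And>j. j \<in> J \<Longrightarrow> norm (v j) = 1" using v0u v1u by (auto simp: J_def v_def)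
    let ?P = "\<lambda>z::nat \<Rightarrow> real. C < n1\<^sup>2 * ((z 0)\<^sup>2 + (z 1)\<^sup>2)"
    have Tm: "{z \<in> space (PiM J (\<lambda>_. ?N)). ?P z} \<in> sets (PiM J (\<lambda>_. ?N))"
    proof -
      have [measurable]: "(\<lambda>x. x i) \<in> borel_measurable (PiM J (\<lambda>_. ?N))" if "i \<in> J" for i
        using comp_meas[OF that] .
      have "(0::nat) \<in> J" "(1::nat) \<in> J" by (auto simp: J_def)
      then show ?thesis by measurable
    qed
    have z: "cdot a (0 :: complex ^ 'n) = 0" for a by (simp add: cdot_def)
    have eq: "{p. (cmod (cdot (avec (fst p) (snd p)) y2))\<^sup>2 + C < (cmod (cdot (avec (fst p) (snd p)) y1))\<^sup>2}
        = {p. ?P (\<lambda>j\<in>J. emb p \<bullet> v j)}"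
      by (auto simp: y20 c1 z J_def v_def)
    have "emeasure ?\<Omega> {p. (cmod (cdot (avec (fst p) (snd p)) y2))\<^sup>2 + C < (cmod (cdot (avec (fst p) (snd p)) y1))\<^sup>2}
        = emeasure (PiM J (\<lambda>_. ?N)) {z \<in> space (PiM J (\<lambda>_. ?N)). ?P z}"
      unfolding eq by (rule transport[OF J orthv unitv Tm])
    also have "\<dots> = ennreal (exp (- (C / n1\<^sup>2)))"
      unfolding J_def by (rule tail_J2) (use n1 C in simp_all)
    finally show ?thesis using True n1 by (simp add: n1_def n2_def)
  next
    case False
    then have n2: "n2 > 0" by (simp add: n2_def)
    define v2 where "v2 = (1 / n2) *\<^sub>R Yr y2"
    define v3 where "v3 = (1 / n2) *\<^sub>R Yi y2"
    have v2u: "norm v2 = 1" and v3u: "norm v3 = 1" using n2 by (simp_all add: v2_def v3_def n2_def norm_Yr norm_Yi)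
    have v23: "v2 \<bullet> v3 = 0" by (simp add: v2_def v3_def Yr_Yi_self)
    have v02: "v0 \<bullet> v2 = 0" and v03: "v0 \<bullet> v3 = 0" and v12: "v1 \<bullet> v2 = 0" and v13: "v1 \<bullet> v3 = 0"
      by (simp_all add: v0_def v1_def v2_def v3_def Yr_Yr Yr_Yi Yi_Yr Yi_Yi orth)
    have c2: "(cmod (cdot (avec g g') y2))\<^sup>2 = n2\<^sup>2 * ((emb (g, g') \<bullet> v2)\<^sup>2 + (emb (g, g') \<bullet> v3)\<^sup>2)" for g g'
      unfolding v2_def v3_def n2_def by (rule cmod_emb) (use n2 in \<open>simp add: n2_def\<close>)
    define v where "v j = (if j = (0::nat) then v0 else if j = 1 then v1 else if j = 2 then v2 else v3)" for j
    define J where "J = {0, 1, 2, 3::nat}"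
    have J: "finite J" by (simp add: J_def)
    have orthv: "\<And>i j. i \<in> J \<Longrightarrow> j \<in> J \<Longrightarrow> i \<noteq> j \<Longrightarrow> v i \<bullet> v j = 0"
      using v01 v02 v03 v12 v13 v23 by (auto simp: J_def v_def inner_commute)
    have unitv: "\<And>j. j \<in> J \<Longrightarrow> norm (v j) = 1" using v0u v1u v2u v3u by (auto simp: J_def v_def)
    let ?P = "\<lambda>z::nat \<Rightarrow> real. n2\<^sup>2 * ((z 2)\<^sup>2 + (z 3)\<^sup>2) + C < n1\<^sup>2 * ((z 0)\<^sup>2 + (z 1)\<^sup>2)"
    have Tm: "{z \<in> space (PiM J (\<lambda>_. ?N)). ?P z} \<in> sets (PiM J (\<lambda>_. ?N))"
    proof -
      have [measurable]: "(\<lambda>x. x i) \<in> borel_measurable (PiM J (\<lambda>_. ?N))" if "i \<in> J" for i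
        using comp_meas[OF that] .
      have "(0::nat) \<in> J" "(1::nat) \<in> J" "(2::nat) \<in> J" "(3::nat) \<in> J" by (auto simp: J_def)
      then show ?thesis by measurable
    qed
    have eq: "{p. (cmod (cdot (avec (fst p) (snd p)) y2))\<^sup>2 + C < (cmod (cdot (avec (fst p) (snd p)) y1))\<^sup>2}
        = {p. ?P (\<lambda>j\<in>J. emb p \<bullet> v j)}"
      by (auto simp: c1 c2 J_def v_def)
    have "emeasure ?\<Omega> {p. (cmod (cdot (avec (fst p) (snd p)) y2))\<^sup>2 + C < (cmod (cdot (avec (fst p) (snd p)) y1))\<^sup>2}
        = emeasure (PiM J (\<lambda>_. ?N)) {z \<in> space (PiM J (\<lambda>_. ?N)). ?P z}"
      unfolding eq by (rule transport[OF J orthv unitv Tm])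
    also have "\<dots> = ennreal (n1\<^sup>2 / (n1\<^sup>2 + n2\<^sup>2) * exp (- (C / n1\<^sup>2)))"
      unfolding J_def by (rule tail_J4) (use n1 C in simp_all)
    finally show ?thesis by (simp add: n1_def n2_def)
  qed
qed


theorem lemma3:
  fixes xs h :: "complex ^ 'n::finite"
    and \<delta> \<eta> t :: real
  assumes "0 < \<delta>" and "\<delta> < 1" and "\<eta> > 0" and "t > 0"
    and "norm xs = 1"
    and "h \<in> C'_set xs \<delta> \<inter> R_set xs \<delta>"
    and "norm h > 1 / (t * \<eta>)"
  shows "measure (gauss_half \<Otimes>\<^sub>M gauss_half)
           {(g, g'). rinner (cdot (avec g g') xs *s avec g g') h > 1 / (2 * \<eta>)}
         \<ge> (1/2 - sqrt (1 - \<delta>^2) / 2) * exp (- 2 * sqrt 2 * t / \<delta>^2)"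
proof -
  note d = assms(1,2) and eta = assms(3) and t = assms(4) and nx = assms(5)
  have gh: "gauss_half = PiM UNIV (\<lambda>_::'n. nmeas (sqrt (1/2)))"
    by (simp add: gauss_half_def nmeas_def)
  define \<alpha> where "\<alpha> = cdot xs h"
  define A where "A = Re \<alpha>"
  define I where "I = Im \<alpha>"
  define h' where "h' = h - (\<i> * complex_of_real (Im (cdot xs h))) *s xs"
  define \<rho> where "\<rho> = norm h'"
  define \<beta> where "\<beta> = norm (h - \<alpha> *s xs)"
  have rho2: "\<rho>\<^sup>2 = (norm h)\<^sup>2 - I\<^sup>2"
    unfolding \<rho>_def h'_def norm_sub_scale[OF nx] \<alpha>_def[symmetric] I_def
    by (simp add: norm_mult power2_eq_square)
  have beta2: "\<beta>\<^sup>2 = (norm h)\<^sup>2 - (A\<^sup>2 + I\<^sup>2)"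
    unfolding \<beta>_def norm_sub_scale[OF nx] \<alpha>_def[symmetric] A_def I_def cmod_power2
    by (simp add: power2_eq_square)
  have rr: "\<rho>\<^sup>2 = \<beta>\<^sup>2 + A\<^sup>2" using rho2 beta2 by simp
  have nn: "(norm h)\<^sup>2 = \<rho>\<^sup>2 + I\<^sup>2" using rho2 by simp
  have hC: "h \<in> C'_set xs \<delta>" and hR: "h \<in> R_set xs \<delta>" using assms(6) by auto
  have sq: "sqrt ((norm h)\<^sup>2 - (cmod (cdot xs h))\<^sup>2) = \<beta>"
  proof -
    have "(norm h)\<^sup>2 - (cmod (cdot xs h))\<^sup>2 = \<beta>\<^sup>2"
      using beta2 by (simp add: \<alpha>_def[symmetric] cmod_power2 A_def I_def)
    then show ?thesis by (simp add: \<beta>_def)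
  qed
  have C: "- sqrt (1 - \<delta>\<^sup>2) * \<beta> \<le> \<delta> * A"
    using hC unfolding C'_set_def rinner_def by (simp add: sq A_def \<alpha>_def)
  have R: "\<delta> * \<bar>I\<bar> \<le> \<beta>"
    using hR unfolding R_set_def by (simp add: \<beta>_def \<alpha>_def I_def)
  have fi: "\<rho> > 0" "\<rho> + A > 0"
    "(\<rho> + A) / (2 * \<rho>) * exp (- (1 / (\<eta> * (\<rho> + A)))) \<ge> (1/2 - sqrt (1 - \<delta>\<^sup>2) / 2) * exp (- 2 * sqrt 2 * t / \<delta>\<^sup>2)"
    using final_ineq[OF d eta t _ _ rr nn _ R C assms(7)] by (auto simp: \<beta>_def \<rho>_def)
  define m where "m = sqrt \<rho>"
  have m: "m > 0" using fi by (simp add: m_def)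
  have mm: "m\<^sup>2 = norm (h - (\<i> * complex_of_real (Im (cdot xs h))) *s xs)"
    using fi by (simp add: m_def \<rho>_def h'_def)
  define y1 where "y1 = complex_of_real m *s xs + complex_of_real (1 / m) *s h'"
  define y2 where "y2 = complex_of_real m *s xs - complex_of_real (1 / m) *s h'"
  have yf: "(norm y1)\<^sup>2 = 2 * (\<rho> + A)" "(norm y2)\<^sup>2 = 2 * (\<rho> - A)" "cdot y1 y2 = 0"
    using y_facts[OF nx m mm] by (simp_all add: y1_def y2_def h'_def \<rho>_def A_def \<alpha>_def)
  have Q: "rinner (cdot (avec g g') xs *s avec g g') h = ((cmod (cdot (avec g g') y1))\<^sup>2 - (cmod (cdot (avec g g') y2))\<^sup>2) / 4" for g g'
    using Q_ident[OF m, where xs=xs and h=h and a="avec g g'"] unfolding y1_def y2_def h'_def .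
  have y1pos: "norm y1 > 0"
  proof -
    have "(norm y1)\<^sup>2 > 0" using yf fi by simp
    then show ?thesis by (simp add: zero_less_power2)
  qed
  have seteq: "{(g, g'). rinner (cdot (avec g g') xs *s avec g g') h > 1 / (2 * \<eta>)} =
      {p. (cmod (cdot (avec (fst p) (snd p)) y2))\<^sup>2 + 2 / \<eta> < (cmod (cdot (avec (fst p) (snd p)) y1))\<^sup>2}"
    using eta by (auto simp: Q field_simps)
  have "emeasure (gauss_half \<Otimes>\<^sub>M gauss_half) {(g, g'). rinner (cdot (avec g g') xs *s avec g g') h > 1 / (2 * \<eta>)}
      = ennreal ((norm y1)\<^sup>2 / ((norm y1)\<^sup>2 + (norm y2)\<^sup>2) * exp (- (2 / \<eta> / (norm y1)\<^sup>2)))"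
    unfolding seteq gh by (rule event_measure[OF yf(3) y1pos]) (use eta in simp)
  also have "(norm y1)\<^sup>2 / ((norm y1)\<^sup>2 + (norm y2)\<^sup>2) * exp (- (2 / \<eta> / (norm y1)\<^sup>2))
      = (\<rho> + A) / (2 * \<rho>) * exp (- (1 / (\<eta> * (\<rho> + A))))"
  proof -
    have e: "2 / \<eta> / (2 * (\<rho> + A)) = 1 / (\<eta> * (\<rho> + A))"
    proof -
      have "2 / \<eta> / (2 * (\<rho> + A)) = 2 / (2 * (\<eta> * (\<rho> + A)))"
        by (simp only: divide_divide_eq_left mult.left_commute)
      also have "\<dots> = 1 / (\<eta> * (\<rho> + A))" by simp
      finally show ?thesis .
    qed
    have f: "2 * (\<rho> + A) / (2 * (\<rho> + A) + 2 * (\<rho> - A)) = (\<rho> + A) / (2 * \<rho>)" using fi by (simp add: field_simps)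
    show ?thesis unfolding yf e f ..
  qed
  finally have "measure (gauss_half \<Otimes>\<^sub>M gauss_half) {(g, g'). rinner (cdot (avec g g') xs *s avec g g') h > 1 / (2 * \<eta>)}
      = (\<rho> + A) / (2 * \<rho>) * exp (- (1 / (\<eta> * (\<rho> + A))))"
    using fi by (simp add: measure_def)
  then show ?thesis using fi(3) by simp
qed


end
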